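(* Let $F$ be a real quadratic field, let $k_1,k_2$ be integers and let $g:\mathbb{H}^2\to\mathbb{C}$ be a smooth Hilbert modular form of weight $(k_1,k_2)$ for some congruence subgroup of $\operatorname{SL}_2(F)$. Assume that, as a function of the first variable, $g$ is annihilated by $\Delta_{k_1}$ and, as a function of the second variable, $g$ is annihilated by $\Delta_{k_2}$. Then for every non-negative integer $j$, \[ (-4\pi)^jL(\mathcal{C}_j(g))=\binom{k_2+j-1}{j}(R^j_{k_1,1}L_{k_2,2}g)(\tau,\tau)+(-1)^j\binom{k_1+j-1}{j}(L_{k_1,1}R^j_{k_2,2}g)(\tau,\tau). \]
   Context: For $\tau=u+iv$: $R_k=2i\partial_\tau+kv^{-1}$, $L=L_k=-2iv^2\partial_{\bar\tau}$, $R^j_k=R_{k+2j-2}\circ\cdots\circ R_k$, $\Delta_k=-v^2(\partial_u^2+\partial_v^2)+ikv(\partial_u+i\partial_v)$. $R_{k,i}$, $L_{k,i}$ and $R^j_{k,i}$ denote these operators acting in the variable $\tau_i$ of $(\tau_1,\tau_2)\in\mathbb{H}^2$. The $j$-th Cohen operator is $\mathcal{C}_j(g)(\tau)=(2\pi i)^{-j}\sum_{s=0}^j(-1)^s\binom{k_1+j-1}{s}\binom{k_2+j-1}{j-s}\left(\partial_{\tau_1}^{j-s}\partial_{\tau_2}^s g\right)(\tau,\tau)$, a function of $\tau\in\mathbb{H}$. Binomial coefficients $\binom{x}{s}=x(x-1)\cdots(x-s+1)/s!$. *)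

theory Defs
  imports "HOL-Analysis.Analysis" "HOL-Computational_Algebra.Squarefree"
begin

definition uhp :: "complex set" where "uhp = {z. Im z > 0}"

definition du :: "(complex \<Rightarrow> complex) \<Rightarrow> complex \<Rightarrow> complex" where
  "du f z = vector_derivative (\<lambda>t::real. f (z + of_real t)) (at 0)"
definition dv :: "(complex \<Rightarrow> complex) \<Rightarrow> complex \<Rightarrow> complex" where
  "dv f z = vector_derivative (\<lambda>t::real. f (z + \<i> * of_real t)) (at 0)"

definition dtau :: "(complex \<Rightarrow> complex) \<Rightarrow> complex \<Rightarrow> complex" where
  "dtau f z = (du f z - \<i> * dv f z) / 2"
definition dtaubar :: "(complex \<Rightarrow> complex) \<Rightarrow> complex \<Rightarrow> complex" where
  "dtaubar f z = (du f z + \<i> * dv f z) / 2"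

definition Rop :: "int \<Rightarrow> (complex \<Rightarrow> complex) \<Rightarrow> complex \<Rightarrow> complex" where
  "Rop k f z = 2 * \<i> * dtau f z + of_int k / of_real (Im z) * f z"
definition Lop :: "(complex \<Rightarrow> complex) \<Rightarrow> complex \<Rightarrow> complex" where
  "Lop f z = - 2 * \<i> * of_real ((Im z)^2) * dtaubar f z"

fun Rpow :: "nat \<Rightarrow> int \<Rightarrow> (complex \<Rightarrow> complex) \<Rightarrow> complex \<Rightarrow> complex" where
  "Rpow 0 k f = f"
| "Rpow (Suc j) k f = Rop (k + 2 * int j) (Rpow j k f)"

definition Delta :: "int \<Rightarrow> (complex \<Rightarrow> complex) \<Rightarrow> complex \<Rightarrow> complex" where
  "Delta k f z = - of_real ((Im z)^2) * (du (du f) z + dv (dv f) z)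
      + \<i> * of_int k * of_real (Im z) * (du f z + \<i> * dv f z)"

definition in1 :: "((complex \<Rightarrow> complex) \<Rightarrow> complex \<Rightarrow> complex)
    \<Rightarrow> (complex \<times> complex \<Rightarrow> complex) \<Rightarrow> complex \<times> complex \<Rightarrow> complex" where
  "in1 T g = (\<lambda>(z1, z2). T (\<lambda>z. g (z, z2)) z1)"
definition in2 :: "((complex \<Rightarrow> complex) \<Rightarrow> complex \<Rightarrow> complex)
    \<Rightarrow> (complex \<times> complex \<Rightarrow> complex) \<Rightarrow> complex \<times> complex \<Rightarrow> complex" where
  "in2 T g = (\<lambda>(z1, z2). T (\<lambda>z. g (z1, z)) z2)"

definition cohen :: "int \<Rightarrow> int \<Rightarrow> nat \<Rightarrow> (complex \<times> complex \<Rightarrow> complex) \<Rightarrow> complex \<Rightarrow> complex" where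
  "cohen k1 k2 j g z = (2 * of_real pi * \<i>) powi (- int j) *
     (\<Sum>s=0..j. (-1)^s * ((of_int (k1 + int j - 1) :: complex) gchoose s)
        * ((of_int (k2 + int j - 1) :: complex) gchoose (j - s))
        * ((in1 dtau ^^ (j - s)) ((in2 dtau ^^ s) g)) (z, z))"

text \<open>Iterated directional (Frechet) derivatives; C^infinity on an open set means
  all iterated directional derivatives exist (are differentiable) on the set.\<close>
fun diter :: "('a::real_normed_vector) list \<Rightarrow> ('a \<Rightarrow> 'b::real_normed_vector) \<Rightarrow> 'a \<Rightarrow> 'b" where
  "diter [] f = f"
| "diter (v # vs) f = (\<lambda>x. frechet_derivative (diter vs f) (at x) v)"

definition smooth_on :: "'a::real_normed_vector set \<Rightarrow> ('a \<Rightarrow> 'b::real_normed_vector) \<Rightarrow> bool" where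
  "smooth_on S f \<longleftrightarrow> (\<forall>vs. diter vs f differentiable_on S)"

text \<open>F = Q(sqrt d) for a squarefree integer d \<ge> 2, embedded in the reals by the
  first real embedding; the second embedding is the Galois conjugation.\<close>
definition real_quadratic_param :: "nat \<Rightarrow> bool" where
  "real_quadratic_param d \<longleftrightarrow> d \<ge> 2 \<and> squarefree d"

definition qf_elem :: "nat \<Rightarrow> real \<Rightarrow> bool" where
  "qf_elem d x \<longleftrightarrow> (\<exists>a b :: rat. x = of_rat a + of_rat b * sqrt (real d))"

definition qf_conj :: "nat \<Rightarrow> real \<Rightarrow> real" where
  "qf_conj d x = (THE y. \<exists>a b :: rat. x = of_rat a + of_rat b * sqrt (real d)
                          \<and> y = of_rat a - of_rat b * sqrt (real d))"

text \<open>Ring of integers O_F: elements whose minimal polynomial X^2 - tr X + N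
  has integer coefficients.\<close>
definition qf_int :: "nat \<Rightarrow> real \<Rightarrow> bool" where
  "qf_int d x \<longleftrightarrow> qf_elem d x \<and> x + qf_conj d x \<in> \<int> \<and> x * qf_conj d x \<in> \<int>"

text \<open>2x2 matrices (a, b, c, e) = [[a,b],[c,e]].\<close>
type_synonym mat2 = "real \<times> real \<times> real \<times> real"

definition mmul :: "mat2 \<Rightarrow> mat2 \<Rightarrow> mat2" where
  "mmul A B = (case A of (a, b, c, e) \<Rightarrow> case B of (a', b', c', e') \<Rightarrow>
      (a * a' + b * c', a * b' + b * e', c * a' + e * c', c * b' + e * e'))"
definition minv :: "mat2 \<Rightarrow> mat2" where
  "minv A = (case A of (a, b, c, e) \<Rightarrow> (e, - b, - c, a))"

definition SL2_OF :: "nat \<Rightarrow> mat2 set" where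
  "SL2_OF d = {(a, b, c, e). qf_int d a \<and> qf_int d b \<and> qf_int d c \<and> qf_int d e
                            \<and> a * e - b * c = 1}"

definition Gamma_princ :: "nat \<Rightarrow> nat \<Rightarrow> mat2 set" where
  "Gamma_princ d N = {(a, b, c, e) \<in> SL2_OF d. qf_int d ((a - 1) / N) \<and> qf_int d (b / N)
                        \<and> qf_int d (c / N) \<and> qf_int d ((e - 1) / N)}"

definition congruence_subgroup :: "nat \<Rightarrow> mat2 set \<Rightarrow> bool" where
  "congruence_subgroup d G \<longleftrightarrow> G \<subseteq> SL2_OF d \<and> (1, 0, 0, 1) \<in> G
     \<and> (\<forall>A\<in>G. \<forall>B\<in>G. mmul A B \<in> G) \<and> (\<forall>A\<in>G. minv A \<in> G)
     \<and> (\<exists>N > 0. Gamma_princ d N \<subseteq> G)"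

definition moebius :: "mat2 \<Rightarrow> complex \<Rightarrow> complex" where
  "moebius A z = (case A of (a, b, c, e) \<Rightarrow> (of_real a * z + of_real b) / (of_real c * z + of_real e))"

definition conjmat :: "nat \<Rightarrow> mat2 \<Rightarrow> mat2" where
  "conjmat d A = (case A of (a, b, c, e) \<Rightarrow> (qf_conj d a, qf_conj d b, qf_conj d c, qf_conj d e))"

definition jfac :: "mat2 \<Rightarrow> complex \<Rightarrow> complex" where
  "jfac A z = (case A of (a, b, c, e) \<Rightarrow> of_real c * z + of_real e)"

definition smooth_HMF :: "nat \<Rightarrow> int \<Rightarrow> int \<Rightarrow> mat2 set \<Rightarrow> (complex \<times> complex \<Rightarrow> complex) \<Rightarrow> bool" where
  "smooth_HMF d k1 k2 G g \<longleftrightarrow> smooth_on (uhp \<times> uhp) g \<and>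
     (\<forall>A\<in>G. \<forall>z1\<in>uhp. \<forall>z2\<in>uhp.
        g (moebius A z1, moebius (conjmat d A) z2)
          = jfac A z1 powi k1 * jfac (conjmat d A) z2 powi k2 * g (z1, z2))"

end

theory Submission
  imports Defs
begin


definition Dd :: "'a::real_normed_vector \<Rightarrow> ('a \<Rightarrow> complex) \<Rightarrow> 'a \<Rightarrow> complex" where
  "Dd a F = (\<lambda>x. frechet_derivative F (at x) a)"

lemma diter_Cons': "diter (a # vs) F = Dd a (diter vs F)" by (simp add: Dd_def)

lemma Dd_has: "(F has_derivative F') (at x) \<Longrightarrow> Dd a F x = F' a"
proof -
  assume h: "(F has_derivative F') (at x)"
  have "F' = frechet_derivative F (at x)" by (rule frechet_derivative_at[OF h])
  then show ?thesis by (simp add: Dd_def)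
qed

lemma Dd_local:
  assumes U: "open U" "x \<in> U" and eq: "\<And>y. y \<in> U \<Longrightarrow> F y = G y"
  shows "Dd a F x = Dd a G x"
proof -
  have "(F has_derivative f') (at x) \<longleftrightarrow> (G has_derivative f') (at x)" for f'
  proof
    assume "(F has_derivative f') (at x)"
    then show "(G has_derivative f') (at x)"
      by (rule has_derivative_transform_within_open[OF _ U]) (simp add: eq)
  next
    assume "(G has_derivative f') (at x)"
    then show "(F has_derivative f') (at x)"
      by (rule has_derivative_transform_within_open[OF _ U]) (simp add: eq)
  qed
  then have "frechet_derivative F (at x) = frechet_derivative G (at x)"
    unfolding frechet_derivative_def by simp
  then show ?thesis by (simp add: Dd_def)
qed

lemma diff_local:
  assumes U: "open U" "x \<in> U" and eq: "\<And>y. y \<in> U \<Longrightarrow> F y = G y" and d: "G differentiable at x"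
  shows "F differentiable at x"
proof -
  obtain G' where "(G has_derivative G') (at x)" using d unfolding differentiable_def by blast
  then have "(F has_derivative G') (at x)"
    by (rule has_derivative_transform_within_open[OF _ U]) (simp add: eq)
  then show ?thesis unfolding differentiable_def by blast
qed

lemma Dd_lin:
  assumes "F differentiable at x" "G differentiable at x"
  shows "Dd a (\<lambda>y. \<alpha> * F y + \<beta> * G y) x = \<alpha> * Dd a F x + \<beta> * Dd a G x"
proof -
  obtain F' G' where F: "(F has_derivative F') (at x)" and G: "(G has_derivative G') (at x)"
    using assms unfolding differentiable_def by blast
  have H: "((\<lambda>y. \<alpha> * F y + \<beta> * G y) has_derivative (\<lambda>h. \<alpha> * F' h + \<beta> * G' h)) (at x)"
    using F G by (auto intro!: derivative_eq_intros)
  show ?thesis using Dd_has[OF H] Dd_has[OF F] Dd_has[OF G] by simp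
qed

lemma Dd_mult:
  assumes "F differentiable at x" "G differentiable at x"
  shows "Dd a (\<lambda>y. F y * G y) x = Dd a F x * G x + F x * Dd a G x"
proof -
  obtain F' G' where F: "(F has_derivative F') (at x)" and G: "(G has_derivative G') (at x)"
    using assms unfolding differentiable_def by blast
  have H: "((\<lambda>y. F y * G y) has_derivative (\<lambda>h. F x * G' h + F' h * G x)) (at x)"
    using F G by (auto intro!: derivative_eq_intros)
  show ?thesis using Dd_has[OF H] Dd_has[OF F] Dd_has[OF G] by (simp add: algebra_simps)
qed

lemma Dd_sum:
  assumes "\<And>s. s \<in> S \<Longrightarrow> F s differentiable at x"
  shows "Dd a (\<lambda>y. \<Sum>s\<in>S. F s y) x = (\<Sum>s\<in>S. Dd a (F s) x)"
proof -
  have H: "((\<lambda>y. \<Sum>s\<in>S. F s y) has_derivative (\<lambda>h. \<Sum>s\<in>S. frechet_derivative (F s) (at x) h)) (at x)"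
    by (intro has_derivative_sum) (use assms frechet_derivative_works in blast)
  show ?thesis using Dd_has[OF H, of a] by (simp add: Dd_def)
qed

lemma Dd_add_dir:
  assumes "F differentiable at x"
  shows "Dd (a + b) F x = Dd a F x + Dd b F x"
  using linear_frechet_derivative[OF assms] by (simp add: Dd_def linear_add)

lemma Dd_scale_dir:
  assumes "F differentiable at x"
  shows "Dd (r *\<^sub>R a) F x = r *\<^sub>R Dd a F x"
  using linear_frechet_derivative[OF assms] by (simp add: Dd_def linear_scale)

lemma vd_line:
  fixes G :: "'a::real_normed_vector \<Rightarrow> complex"
  assumes "open S" "x \<in> S" "\<And>y. y \<in> S \<Longrightarrow> F y = G y" "G differentiable at x"
  shows "vector_derivative (\<lambda>t::real. F (x + t *\<^sub>R a)) (at 0) = Dd a G x"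
proof -
  obtain G' where G: "(G has_derivative G') (at x)"
    using assms unfolding differentiable_def by blast
  have lin: "linear G'" using G has_derivative_linear by blast
  have l: "((\<lambda>t::real. x + t *\<^sub>R a) has_derivative (\<lambda>t. t *\<^sub>R a)) (at 0)"
    by (intro derivative_eq_intros) auto
  have "((\<lambda>t::real. G (x + t *\<^sub>R a)) has_derivative (\<lambda>t. G' (t *\<^sub>R a))) (at 0)"
    using has_derivative_compose[OF l, of G G'] G by simp
  then have "((\<lambda>t::real. G (x + t *\<^sub>R a)) has_vector_derivative G' a) (at 0)"
    unfolding has_vector_derivative_def using lin by (simp add: linear_scale)
  moreover have "open {t::real. x + t *\<^sub>R a \<in> S}"
    by (intro open_vimage[where f = "\<lambda>t. x + t *\<^sub>R a", unfolded vimage_def] assms continuous_intros)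
  ultimately have "((\<lambda>t::real. F (x + t *\<^sub>R a)) has_vector_derivative G' a) (at 0)"
    by (rule has_vector_derivative_transform_within_open) (use assms in auto)
  then have "vector_derivative (\<lambda>t::real. F (x + t *\<^sub>R a)) (at 0) = G' a"
    by (rule vector_derivative_at)
  then show ?thesis using Dd_has[OF G, of a] by simp
qed

lemma diter_Dd: "diter vs (Dd a F) = diter (vs @ [a]) F"
  by (induction vs) (auto simp: Dd_def)

lemma smooth_Dd: "smooth_on U F \<Longrightarrow> smooth_on U (Dd a F)"
  unfolding smooth_on_def diter_Dd by blast

lemma smooth_diff: "open U \<Longrightarrow> smooth_on U F \<Longrightarrow> x \<in> U \<Longrightarrow> F differentiable at x"
proof -
  assume U: "open U" and s: "smooth_on U F" and x: "x \<in> U"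
  have "diter [] F differentiable_on U" using s unfolding smooth_on_def by blast
  then have "F differentiable_on U" by simp
  then show ?thesis using x differentiable_on_eq_differentiable_at[OF U] by blast
qed

lemma smooth_diff_Dd: "open U \<Longrightarrow> smooth_on U F \<Longrightarrow> x \<in> U \<Longrightarrow> Dd a F differentiable at x"
  using smooth_diff smooth_Dd by blast

lemma diter_local:
  fixes F G :: "'a::real_normed_vector \<Rightarrow> complex"
  assumes "open U" "\<And>y. y \<in> U \<Longrightarrow> F y = G y" "x \<in> U"
  shows "diter vs F x = diter vs G x"
  using assms(3)
proof (induction vs arbitrary: x)
  case Nil then show ?case using assms by simp
next
  case (Cons v vs)
  show ?case unfolding diter_Cons' by (rule Dd_local[OF assms(1) Cons.prems]) (erule Cons.IH)
qed

lemma smooth_local: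
  fixes F G :: "'a::real_normed_vector \<Rightarrow> complex"
  assumes "open U" "smooth_on U G" "\<And>y. y \<in> U \<Longrightarrow> F y = G y"
  shows "smooth_on U F"
  unfolding smooth_on_def
proof
  fix vs
  show "diter vs F differentiable_on U"
    unfolding differentiable_on_eq_differentiable_at[OF assms(1)]
  proof
    fix x assume x: "x \<in> U"
    have "diter vs G differentiable at x"
      using assms(2) x differentiable_on_eq_differentiable_at[OF assms(1)] unfolding smooth_on_def by blast
    note d = this
    show "diter vs F differentiable at x"
      by (rule diff_local[OF assms(1) x _ d], rule diter_local[OF assms(1) assms(3)], assumption)
  qed
qed

lemma diter_lin:
  fixes F G :: "'a::real_normed_vector \<Rightarrow> complex"
  assumes U: "open U" and F: "smooth_on U F" and G: "smooth_on U G" and x: "x \<in> U"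
  shows "diter vs (\<lambda>y. \<alpha> * F y + \<beta> * G y) x = \<alpha> * diter vs F x + \<beta> * diter vs G x"
  using x
proof (induction vs arbitrary: x)
  case Nil then show ?case by simp
next
  case (Cons v vs)
  have dF: "diter vs F differentiable at x" and dG: "diter vs G differentiable at x"
    using F G Cons.prems differentiable_on_eq_differentiable_at[OF U] unfolding smooth_on_def by blast+
  have "diter (v # vs) (\<lambda>y. \<alpha> * F y + \<beta> * G y) x
        = Dd v (\<lambda>y. \<alpha> * diter vs F y + \<beta> * diter vs G y) x"
    unfolding diter_Cons' by (rule Dd_local[OF U Cons.prems]) (erule Cons.IH)
  also have "\<dots> = \<alpha> * diter (v # vs) F x + \<beta> * diter (v # vs) G x"
    unfolding diter_Cons' by (rule Dd_lin[OF dF dG])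
  finally show ?case .
qed

lemma smooth_lin:
  fixes F G :: "'a::real_normed_vector \<Rightarrow> complex"
  assumes U: "open U" and F: "smooth_on U F" and G: "smooth_on U G"
  shows "smooth_on U (\<lambda>y. \<alpha> * F y + \<beta> * G y)"
  unfolding smooth_on_def
proof
  fix vs
  show "diter vs (\<lambda>y. \<alpha> * F y + \<beta> * G y) differentiable_on U"
    unfolding differentiable_on_eq_differentiable_at[OF U]
  proof
    fix x assume x: "x \<in> U"
    have "diter vs F differentiable at x" "diter vs G differentiable at x"
      using F G x differentiable_on_eq_differentiable_at[OF U] unfolding smooth_on_def by blast+
    then have "(\<lambda>y. \<alpha> * diter vs F y + \<beta> * diter vs G y) differentiable at x"
      by (intro differentiable_add differentiable_mult differentiable_const) auto
    note d = this
    show "diter vs (\<lambda>y. \<alpha> * F y + \<beta> * G y) differentiable at x"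
      by (rule diff_local[OF U x _ d]) (erule diter_lin[OF U F G])
  qed
qed



lemma second_limit:
  fixes F :: "'a::real_normed_vector \<Rightarrow> complex"
  assumes U: "open U" "x \<in> U" and dF: "\<And>y. y \<in> U \<Longrightarrow> F differentiable at y"
    and dA: "Dd a F differentiable at x"
  shows "((\<lambda>h::real. (F (x + h *\<^sub>R a + h *\<^sub>R b) - F (x + h *\<^sub>R a) - F (x + h *\<^sub>R b) + F x)
            / of_real (h^2)) \<longlongrightarrow> Dd b (Dd a F) x) (at_right 0)"
proof -
  define G where "G = Dd a F"
  obtain G' where G': "(G has_derivative G') (at x)" using dA by (auto simp: differentiable_def G_def)
  have linG: "linear G'" using G' has_derivative_linear by blast
  define c where "c = G' b"
  have c: "Dd b (Dd a F) x = c" using Dd_has[OF G', of b] by (simp add: c_def G_def)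
  obtain r where r: "r > 0" "ball x r \<subseteq> U" using U open_contains_ball by blast
  define M where "M = norm a + norm b + 1"
  have M: "M > 0" unfolding M_def by (simp add: add_nonneg_pos)
  have "((\<lambda>h::real. (F (x + h *\<^sub>R a + h *\<^sub>R b) - F (x + h *\<^sub>R a) - F (x + h *\<^sub>R b) + F x)
            / of_real (h^2)) \<longlongrightarrow> c) (at 0 within {0<..})"
    unfolding Lim_within
  proof (intro allI impI)
    fix e :: real assume e: "e > 0"
    define e' where "e' = e / (4*M)"
    have e': "e' > 0" unfolding e'_def using e M by simp
    obtain d1 where d1: "d1 > 0" "\<And>y. norm (y - x) < d1 \<Longrightarrow> norm (G y - G x - G' (y - x)) \<le> e' * norm (y - x)"
      using G'[unfolded has_derivative_at_alt] e' by blast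
    define d where "d = min d1 r / M"
    have d: "d > 0" unfolding d_def using d1 r M by simp
    show "\<exists>d>0. \<forall>h\<in>{0<..}. 0 < dist h 0 \<and> dist h 0 < d \<longrightarrow>
       dist ((F (x + h *\<^sub>R a + h *\<^sub>R b) - F (x + h *\<^sub>R a) - F (x + h *\<^sub>R b) + F x) / of_real (h^2)) c < e"
    proof (intro exI[of _ d] conjI ballI impI d)
      fix h :: real assume "h \<in> {0<..}" and "0 < dist h 0 \<and> dist h 0 < d"
      then have h: "0 < h" "h < d" by auto
      have hM: "h * M < min d1 r" using h M unfolding d_def by (simp add: field_simps)
      have nt: "norm (t *\<^sub>R a + h *\<^sub>R b) \<le> h * M" "norm (t *\<^sub>R a) \<le> h * M"
        if t: "t \<in> {0..h}" for t
      proof -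
        have "norm (t *\<^sub>R a) = t * norm a" using t by auto
        also have "\<dots> \<le> h * norm a" using t by (auto intro: mult_right_mono)
        finally have 1: "norm (t *\<^sub>R a) \<le> h * norm a" .
        have 2: "norm (h *\<^sub>R b) = h * norm b" using h by auto
        have "norm (t *\<^sub>R a + h *\<^sub>R b) \<le> h * norm a + h * norm b"
          using norm_triangle_ineq[of "t *\<^sub>R a" "h *\<^sub>R b"] 1 2 by linarith
        also have "\<dots> \<le> h * M" using h unfolding M_def by (simp add: algebra_simps)
        finally show "norm (t *\<^sub>R a + h *\<^sub>R b) \<le> h * M" .
        show "norm (t *\<^sub>R a) \<le> h * M" using 1 h unfolding M_def
          by (smt (verit, best) mult_left_mono norm_ge_zero)
      qed
      have inU: "x + t *\<^sub>R a + h *\<^sub>R b \<in> U" "x + t *\<^sub>R a \<in> U" if t: "t \<in> {0..h}" for t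
      proof -
        have "x - (x + t *\<^sub>R a + h *\<^sub>R b) = - (t *\<^sub>R a + h *\<^sub>R b)" by simp
        then have "dist x (x + t *\<^sub>R a + h *\<^sub>R b) = norm (t *\<^sub>R a + h *\<^sub>R b)"
          by (simp only: dist_norm norm_minus_cancel)
        then have "dist x (x + t *\<^sub>R a + h *\<^sub>R b) < r" using nt(1)[OF t] hM by simp
        then show "x + t *\<^sub>R a + h *\<^sub>R b \<in> U" using r by auto
        have "dist x (x + t *\<^sub>R a) < r" using nt(2)[OF t] hM by (simp add: dist_norm)
        then show "x + t *\<^sub>R a \<in> U" using r by auto
      qed
      define \<psi> where "\<psi> t = F (x + t *\<^sub>R a + h *\<^sub>R b) - F (x + t *\<^sub>R a) - of_real (t * h) * c" for t
      define \<psi>' where "\<psi>' t = G (x + t *\<^sub>R a + h *\<^sub>R b) - G (x + t *\<^sub>R a) - of_real h * c" for t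
      have lineF: "((\<lambda>t. F (p + t *\<^sub>R a)) has_derivative (\<lambda>s. s *\<^sub>R G (p + t *\<^sub>R a))) (at t within {0..h})"
        if "p + t *\<^sub>R a \<in> U" for p t
      proof -
        have Fd: "(F has_derivative frechet_derivative F (at (p + t *\<^sub>R a))) (at (p + t *\<^sub>R a))"
          using dF[OF that] frechet_derivative_works by blast
        have l: "((\<lambda>t. p + t *\<^sub>R a) has_derivative (\<lambda>s. s *\<^sub>R a)) (at t within {0..h})"
          by (intro derivative_eq_intros) auto
        have "((\<lambda>t. F (p + t *\<^sub>R a)) has_derivative (\<lambda>s. frechet_derivative F (at (p + t *\<^sub>R a)) (s *\<^sub>R a))) (at t within {0..h})"
          using has_derivative_compose[OF l Fd] by (simp add: o_def)
        moreover have "linear (frechet_derivative F (at (p + t *\<^sub>R a)))"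
          using dF[OF that] linear_frechet_derivative by blast
        ultimately show ?thesis by (simp add: linear_scale G_def Dd_def)
      qed
      have der: "(\<psi> has_derivative (\<lambda>s. s *\<^sub>R \<psi>' t)) (at t within {0..h})" if t: "t \<in> {0..h}" for t
      proof -
        have e1: "x + t *\<^sub>R a + h *\<^sub>R b = (x + h *\<^sub>R b) + t *\<^sub>R a" by (simp add: algebra_simps)
        have A: "((\<lambda>t. F (x + t *\<^sub>R a + h *\<^sub>R b)) has_derivative (\<lambda>s. s *\<^sub>R G (x + t *\<^sub>R a + h *\<^sub>R b))) (at t within {0..h})"
          using lineF[of "x + h *\<^sub>R b" t] inU(1)[OF t] unfolding e1 by (simp add: algebra_simps)
        have B: "((\<lambda>t. F (x + t *\<^sub>R a)) has_derivative (\<lambda>s. s *\<^sub>R G (x + t *\<^sub>R a))) (at t within {0..h})"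
          using lineF[of x t] inU(2)[OF t] by simp
        have C: "((\<lambda>t. of_real (t * h) * c) has_derivative (\<lambda>s. s *\<^sub>R (of_real h * c))) (at t within {0..h})"
          by (auto intro!: derivative_eq_intros simp: scaleR_conv_of_real)
        show ?thesis unfolding \<psi>_def \<psi>'_def
          using has_derivative_diff[OF has_derivative_diff[OF A B] C] by (simp add: scaleR_diff_right)
      qed
      have bnd: "onorm (\<lambda>s. s *\<^sub>R \<psi>' t) \<le> 2 * e' * h * M" if t: "t \<in> {0..h}" for t
      proof -
        have n1: "onorm (\<lambda>s::real. s *\<^sub>R \<psi>' t) = norm (\<psi>' t)"
          using onorm_scaleR_left[of "\<lambda>s::real. s" "\<psi>' t"] onorm_id[where 'a=real] by (simp add: bounded_linear_ident)
        have eq: "\<psi>' t = (G (x + t *\<^sub>R a + h *\<^sub>R b) - G x - G' (t *\<^sub>R a + h *\<^sub>R b))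
                          - (G (x + t *\<^sub>R a) - G x - G' (t *\<^sub>R a))"
        proof -
          have "G' (t *\<^sub>R a + h *\<^sub>R b) = G' (t *\<^sub>R a) + of_real h * c"
            using linG by (simp add: linear_add linear_scale c_def scaleR_conv_of_real)
          then show ?thesis unfolding \<psi>'_def by simp
        qed
        have "norm (\<psi>' t) = norm ((G (x + t *\<^sub>R a + h *\<^sub>R b) - G x - G' (t *\<^sub>R a + h *\<^sub>R b))
                          - (G (x + t *\<^sub>R a) - G x - G' (t *\<^sub>R a)))" using eq by simp
        also have "\<dots> \<le> norm (G (x + t *\<^sub>R a + h *\<^sub>R b) - G x - G' (t *\<^sub>R a + h *\<^sub>R b))
                          + norm (G (x + t *\<^sub>R a) - G x - G' (t *\<^sub>R a))"
          by (rule norm_triangle_ineq4)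
        also have "\<dots> \<le> e' * (h * M) + e' * (h * M)"
        proof (rule add_mono)
          have "norm (G (x + t *\<^sub>R a + h *\<^sub>R b) - G x - G' (t *\<^sub>R a + h *\<^sub>R b)) \<le> e' * norm (t *\<^sub>R a + h *\<^sub>R b)"
            using d1(2)[of "x + t *\<^sub>R a + h *\<^sub>R b"] nt(1)[OF t] hM by (simp add: add.assoc)
          also have "\<dots> \<le> e' * (h * M)" using nt(1)[OF t] e' by (simp add: mult_left_mono)
          finally show "norm (G (x + t *\<^sub>R a + h *\<^sub>R b) - G x - G' (t *\<^sub>R a + h *\<^sub>R b)) \<le> e' * (h * M)" .
          have "norm (G (x + t *\<^sub>R a) - G x - G' (t *\<^sub>R a)) \<le> e' * norm (t *\<^sub>R a)"
            using d1(2)[of "x + t *\<^sub>R a"] nt(2)[OF t] hM by simp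
          also have "\<dots> \<le> e' * (h * M)" using nt(2)[OF t] e' by (simp add: mult_left_mono)
          finally show "norm (G (x + t *\<^sub>R a) - G x - G' (t *\<^sub>R a)) \<le> e' * (h * M)" .
        qed
        finally show ?thesis using n1 by (simp add: algebra_simps)
      qed
      have mvt: "norm (\<psi> h - \<psi> 0) \<le> (2 * e' * h * M) * norm (h - 0)"
        by (rule differentiable_bound[OF convex_real_interval(5) der bnd]) (use h in auto)
      have eqpsi: "\<psi> h - \<psi> 0 = (F (x + h *\<^sub>R a + h *\<^sub>R b) - F (x + h *\<^sub>R a) - F (x + h *\<^sub>R b) + F x) - of_real (h^2) * c"
        unfolding \<psi>_def by (simp add: power2_eq_square)
      have "norm ((F (x + h *\<^sub>R a + h *\<^sub>R b) - F (x + h *\<^sub>R a) - F (x + h *\<^sub>R b) + F x) - of_real (h^2) * c)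
            \<le> e / 2 * h^2"
        using mvt h unfolding eqpsi e'_def using M by (simp add: power2_eq_square field_simps)
      then have "norm ((F (x + h *\<^sub>R a + h *\<^sub>R b) - F (x + h *\<^sub>R a) - F (x + h *\<^sub>R b) + F x) / of_real (h^2) - c)
            \<le> e / 2"
      proof -
        assume A: "norm ((F (x + h *\<^sub>R a + h *\<^sub>R b) - F (x + h *\<^sub>R a) - F (x + h *\<^sub>R b) + F x) - of_real (h^2) * c) \<le> e / 2 * h^2"
        have hz: "(of_real (h^2) :: complex) \<noteq> 0" using h by simp
        have "(F (x + h *\<^sub>R a + h *\<^sub>R b) - F (x + h *\<^sub>R a) - F (x + h *\<^sub>R b) + F x) / of_real (h^2) - c
             = ((F (x + h *\<^sub>R a + h *\<^sub>R b) - F (x + h *\<^sub>R a) - F (x + h *\<^sub>R b) + F x) - of_real (h^2) * c) / of_real (h^2)"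
          using hz by (simp add: field_simps)
        then have "norm ((F (x + h *\<^sub>R a + h *\<^sub>R b) - F (x + h *\<^sub>R a) - F (x + h *\<^sub>R b) + F x) / of_real (h^2) - c)
             = norm ((F (x + h *\<^sub>R a + h *\<^sub>R b) - F (x + h *\<^sub>R a) - F (x + h *\<^sub>R b) + F x) - of_real (h^2) * c) / h^2"
          by (simp add: norm_divide norm_power)
        also have "\<dots> \<le> e / 2" using A h by (simp add: divide_le_eq)
        finally show ?thesis .
      qed
      then show "dist ((F (x + h *\<^sub>R a + h *\<^sub>R b) - F (x + h *\<^sub>R a) - F (x + h *\<^sub>R b) + F x) / of_real (h^2)) c < e"
        using e by (simp add: dist_norm)
    qed
  qed
  then show ?thesis using c by simp
qed

lemma clairaut:
  fixes F :: "'a::real_normed_vector \<Rightarrow> complex"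
  assumes U: "open U" "x \<in> U" and dF: "\<And>y. y \<in> U \<Longrightarrow> F differentiable at y"
    and dA: "Dd a F differentiable at x" and dB: "Dd b F differentiable at x"
  shows "Dd b (Dd a F) x = Dd a (Dd b F) x"
proof -
  note L1 = second_limit[OF U dF dA, of b]
  note L2 = second_limit[OF U dF dB, of a]
  have "(\<lambda>h::real. (F (x + h *\<^sub>R b + h *\<^sub>R a) - F (x + h *\<^sub>R b) - F (x + h *\<^sub>R a) + F x) / of_real (h^2))
      = (\<lambda>h::real. (F (x + h *\<^sub>R a + h *\<^sub>R b) - F (x + h *\<^sub>R a) - F (x + h *\<^sub>R b) + F x) / of_real (h^2))"
    by (simp add: algebra_simps)
  with L2 have L2': "((\<lambda>h::real. (F (x + h *\<^sub>R a + h *\<^sub>R b) - F (x + h *\<^sub>R a) - F (x + h *\<^sub>R b) + F x)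
            / of_real (h^2)) \<longlongrightarrow> Dd a (Dd b F) x) (at_right 0)" by simp
  show ?thesis using tendsto_unique[OF trivial_limit_at_right_real L1 L2'] .
qed



definition LC :: "complex \<Rightarrow> complex \<Rightarrow> 'a::real_normed_vector \<Rightarrow> 'a \<Rightarrow> ('a \<Rightarrow> complex) \<Rightarrow> 'a \<Rightarrow> complex" where
  "LC \<alpha> \<beta> a b F = (\<lambda>y. \<alpha> * Dd a F y + \<beta> * Dd b F y)"

lemma Dd_cmult:
  assumes "F differentiable at x"
  shows "Dd a (\<lambda>y. c * F y) x = c * Dd a F x"
proof -
  obtain F' where F: "(F has_derivative F') (at x)" using assms unfolding differentiable_def by blast
  have H: "((\<lambda>y. c * F y) has_derivative (\<lambda>h. c * F' h)) (at x)"
    using F by (auto intro!: derivative_eq_intros)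
  show ?thesis using Dd_has[OF H] Dd_has[OF F] by simp
qed

lemma LC_smooth: "open U \<Longrightarrow> smooth_on U F \<Longrightarrow> smooth_on U (LC \<alpha> \<beta> a b F)"
  unfolding LC_def by (intro smooth_lin smooth_Dd)

lemma LC_local:
  assumes "open U" "y \<in> U" "\<And>z. z \<in> U \<Longrightarrow> F z = G z"
  shows "LC \<alpha> \<beta> a b F y = LC \<alpha> \<beta> a b G y"
  unfolding LC_def using Dd_local[OF assms] by simp

lemma LC_lin:
  assumes "F differentiable at y" "G differentiable at y"
  shows "LC \<alpha> \<beta> a b (\<lambda>z. c1 * F z + c2 * G z) y = c1 * LC \<alpha> \<beta> a b F y + c2 * LC \<alpha> \<beta> a b G y"
  unfolding LC_def using Dd_lin[OF assms] by (simp add: algebra_simps)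

lemma LC_cmult:
  assumes "F differentiable at y"
  shows "LC \<alpha> \<beta> a b (\<lambda>z. c * F z) y = c * LC \<alpha> \<beta> a b F y"
  unfolding LC_def using Dd_cmult[OF assms] by (simp add: algebra_simps)

lemma LC_mult:
  assumes "F differentiable at y" "G differentiable at y"
  shows "LC \<alpha> \<beta> a b (\<lambda>z. F z * G z) y = LC \<alpha> \<beta> a b F y * G y + F y * LC \<alpha> \<beta> a b G y"
  unfolding LC_def using Dd_mult[OF assms] by (simp add: algebra_simps)

lemma LC_sum:
  assumes "\<And>s. s \<in> S \<Longrightarrow> F s differentiable at y"
  shows "LC \<alpha> \<beta> a b (\<lambda>z. \<Sum>s\<in>S. F s z) y = (\<Sum>s\<in>S. LC \<alpha> \<beta> a b (F s) y)"
  unfolding LC_def using Dd_sum[where S=S and F=F and x=y and a=a, OF assms] Dd_sum[where S=S and F=F and x=y and a=b, OF assms] by (simp add: sum.distrib sum_distrib_left)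

lemma LC_comm:
  assumes U: "open U" and F: "smooth_on U F" and y: "y \<in> U"
  shows "LC \<alpha> \<beta> a b (LC \<alpha>' \<beta>' a' b' F) y = LC \<alpha>' \<beta>' a' b' (LC \<alpha> \<beta> a b F) y"
proof -
  have dF: "\<And>z. z \<in> U \<Longrightarrow> F differentiable at z" using smooth_diff[OF U F] by blast
  have dD: "Dd c F differentiable at y" for c using smooth_diff_Dd[OF U F y] by blast
  have cl: "Dd c (Dd d F) y = Dd d (Dd c F) y" for c d
    using clairaut[OF U y dF dD dD] by blast
  show ?thesis unfolding LC_def
    using Dd_lin[OF dD dD] cl by (simp add: algebra_simps)
qed

lemma LC_pow_smooth: "open U \<Longrightarrow> smooth_on U F \<Longrightarrow> smooth_on U ((LC \<alpha> \<beta> a b ^^ n) F)"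
  by (induction n) (auto intro: LC_smooth)

lemma LC_iter_comm:
  assumes U: "open U" and F: "smooth_on U F"
  shows "y \<in> U \<Longrightarrow> LC \<alpha> \<beta> a b ((LC \<alpha>' \<beta>' a' b' ^^ n) F) y = (LC \<alpha>' \<beta>' a' b' ^^ n) (LC \<alpha> \<beta> a b F) y"
proof (induction n arbitrary: y)
  case 0 then show ?case by simp
next
  case (Suc n)
  have "LC \<alpha> \<beta> a b ((LC \<alpha>' \<beta>' a' b' ^^ Suc n) F) y
      = LC \<alpha>' \<beta>' a' b' (LC \<alpha> \<beta> a b ((LC \<alpha>' \<beta>' a' b' ^^ n) F)) y"
    using LC_comm[OF U LC_pow_smooth[OF U F] Suc.prems] by simp
  also have "\<dots> = LC \<alpha>' \<beta>' a' b' ((LC \<alpha>' \<beta>' a' b' ^^ n) (LC \<alpha> \<beta> a b F)) y"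
    by (rule LC_local[OF U Suc.prems]) (rule Suc.IH)
  also have "\<dots> = (LC \<alpha>' \<beta>' a' b' ^^ Suc n) (LC \<alpha> \<beta> a b F) y" by simp
  finally show ?case .
qed

lemma LC_pow_local:
  assumes U: "open U" and eq: "\<And>z. z \<in> U \<Longrightarrow> F z = G z"
  shows "y \<in> U \<Longrightarrow> (LC \<alpha> \<beta> a b ^^ n) F y = (LC \<alpha> \<beta> a b ^^ n) G y"
proof (induction n arbitrary: y)
  case 0 then show ?case using eq by simp
next
  case (Suc n)
  then show ?case by simp (rule LC_local[OF U Suc.prems], rule Suc.IH)
qed

lemma has_inv_pow:
  fixes w :: "'a::real_normed_vector \<Rightarrow> complex"
  assumes W: "(w has_derivative W) (at y)" and w0: "w y \<noteq> 0"
  shows "((\<lambda>z. inverse (w z) ^ m) has_derivative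
       (\<lambda>h. - of_nat m * inverse (w y) ^ Suc m * W h)) (at y)"
proof -
  have "((\<lambda>z. inverse (w z) ^ m) has_derivative
     (\<lambda>h. of_nat m * (- (inverse (w y) * W h * inverse (w y))) * inverse (w y) ^ (m - 1))) (at y)"
    by (rule has_derivative_power[OF Deriv.has_derivative_inverse[OF w0 W]])
  then show ?thesis
  proof (rule has_derivative_eq_rhs)
    show "(\<lambda>h. of_nat m * (- (inverse (w y) * W h * inverse (w y))) * inverse (w y) ^ (m - 1)) =
       (\<lambda>h. - of_nat m * inverse (w y) ^ Suc m * W h)"
      by (cases m) (auto simp: fun_eq_iff algebra_simps)
  qed
qed

lemma LC_inv_pow:
  fixes w :: "'a::real_normed_vector \<Rightarrow> complex"
  assumes "w differentiable at y" "w y \<noteq> 0"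
  shows "LC \<alpha> \<beta> a b (\<lambda>z. inverse (w z) ^ m) y = - of_nat m * inverse (w y) ^ Suc m * LC \<alpha> \<beta> a b w y"
proof -
  obtain W where W: "(w has_derivative W) (at y)" using assms unfolding differentiable_def by blast
  note H = has_inv_pow[OF W assms(2), of m]
  show ?thesis unfolding LC_def using Dd_has[OF H] Dd_has[OF W] by (simp add: algebra_simps)
qed

lemma diff_inv_pow:
  fixes w :: "'a::real_normed_vector \<Rightarrow> complex"
  assumes "w differentiable at y" "w y \<noteq> 0"
  shows "(\<lambda>z. inverse (w z) ^ m) differentiable at y"
proof -
  obtain W where W: "(w has_derivative W) (at y)" using assms unfolding differentiable_def by blast
  show ?thesis using has_inv_pow[OF W assms(2), of m] unfolding differentiable_def by blast
qed



definition UU :: "(complex \<times> complex) set" where "UU = uhp \<times> uhp"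
lemma open_UU: "open UU" unfolding UU_def uhp_def by (intro open_Times open_halfspace_Im_gt)

abbreviation "e1 \<equiv> (1::complex, 0::complex)"
abbreviation "f1 \<equiv> (\<i>::complex, 0::complex)"
abbreviation "e2 \<equiv> (0::complex, 1::complex)"
abbreviation "f2 \<equiv> (0::complex, \<i>::complex)"
abbreviation "Pd e f \<equiv> LC (1/2) (-(\<i>/2)) e f"
abbreviation "Qd e f \<equiv> LC (1/2) (\<i>/2) e f"

definition w1 :: "complex \<times> complex \<Rightarrow> complex" where "w1 y = of_real (Im (fst y))"
definition w2 :: "complex \<times> complex \<Rightarrow> complex" where "w2 y = of_real (Im (snd y))"

lemma w1_has: "(w1 has_derivative (\<lambda>h. of_real (Im (fst h)))) (at y)"
  unfolding w1_def by (intro derivative_eq_intros) auto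
lemma w2_has: "(w2 has_derivative (\<lambda>h. of_real (Im (snd h)))) (at y)"
  unfolding w2_def by (intro derivative_eq_intros) auto
lemma w1_diff: "w1 differentiable at y" using w1_has unfolding differentiable_def by blast
lemma w2_diff: "w2 differentiable at y" using w2_has unfolding differentiable_def by blast
lemma Dd_w1: "Dd a w1 y = of_real (Im (fst a))" by (rule Dd_has[OF w1_has])
lemma Dd_w2: "Dd a w2 y = of_real (Im (snd a))" by (rule Dd_has[OF w2_has])
lemma w1_nz: "y \<in> UU \<Longrightarrow> w1 y \<noteq> 0" by (auto simp: UU_def uhp_def w1_def)
lemma w2_nz: "y \<in> UU \<Longrightarrow> w2 y \<noteq> 0" by (auto simp: UU_def uhp_def w2_def)

definition LD :: "'a::real_normed_vector \<Rightarrow> ('a \<Rightarrow> complex) \<Rightarrow> 'a \<Rightarrow> complex" where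
  "LD a M y = vector_derivative (\<lambda>t::real. M (y + t *\<^sub>R a)) (at 0)"

lemma LD_Dd: "open S \<Longrightarrow> y \<in> S \<Longrightarrow> (\<And>z. z \<in> S \<Longrightarrow> M z = E z) \<Longrightarrow> E differentiable at y \<Longrightarrow> LD a M y = Dd a E y"
  unfolding LD_def by (rule vd_line)

lemma in1_du: "in1 du M = LD e1 M"
  by (auto simp: fun_eq_iff in1_def du_def LD_def scaleR_conv_of_real)
lemma in1_dv: "in1 dv M = LD f1 M"
  by (auto simp: fun_eq_iff in1_def dv_def LD_def scaleR_conv_of_real mult.commute)
lemma in2_du: "in2 du M = LD e2 M"
  by (auto simp: fun_eq_iff in2_def du_def LD_def scaleR_conv_of_real)
lemma in2_dv: "in2 dv M = LD f2 M"
  by (auto simp: fun_eq_iff in2_def dv_def LD_def scaleR_conv_of_real mult.commute)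

lemma in1_dtau: "in1 dtau M y = (LD e1 M y - \<i> * LD f1 M y) / 2"
  by (cases y) (simp add: in1_def dtau_def flip: in1_du in1_dv)
lemma in2_dtau: "in2 dtau M y = (LD e2 M y - \<i> * LD f2 M y) / 2"
  by (cases y) (simp add: in2_def dtau_def flip: in2_du in2_dv)
lemma in1_dtaubar: "in1 dtaubar M y = (LD e1 M y + \<i> * LD f1 M y) / 2"
  by (cases y) (simp add: in1_def dtaubar_def flip: in1_du in1_dv)
lemma in2_dtaubar: "in2 dtaubar M y = (LD e2 M y + \<i> * LD f2 M y) / 2"
  by (cases y) (simp add: in2_def dtaubar_def flip: in2_du in2_dv)

lemma in1_Rop: "in1 (Rop m) M y = 2 * \<i> * ((LD e1 M y - \<i> * LD f1 M y) / 2) + of_int m / w1 y * M y"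
  by (cases y) (simp add: in1_def Rop_def w1_def flip: in1_dtau[unfolded in1_def])
lemma in2_Rop: "in2 (Rop m) M y = 2 * \<i> * ((LD e2 M y - \<i> * LD f2 M y) / 2) + of_int m / w2 y * M y"
  by (cases y) (simp add: in2_def Rop_def w2_def flip: in2_dtau[unfolded in2_def])

lemma in1_Lop: "in1 Lop M y = - 2 * \<i> * (w1 y)^2 * ((LD e1 M y + \<i> * LD f1 M y) / 2)"
  by (cases y) (simp add: in1_def Lop_def w1_def flip: in1_dtaubar[unfolded in1_def])
lemma in2_Lop: "in2 Lop M y = - 2 * \<i> * (w2 y)^2 * ((LD e2 M y + \<i> * LD f2 M y) / 2)"
  by (cases y) (simp add: in2_def Lop_def w2_def flip: in2_dtaubar[unfolded in2_def])

lemma in1_Delta_aux: "in1 (Delta k) M = (\<lambda>y. (- ((w1 y)^2)) * (in1 du (in1 du M) y + in1 dv (in1 dv M) y)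
   + \<i> * of_int k * w1 y * (in1 du M y + \<i> * in1 dv M y))"
  by (auto simp: fun_eq_iff in1_def Delta_def w1_def)
lemma in2_Delta_aux: "in2 (Delta k) M = (\<lambda>y. (- ((w2 y)^2)) * (in2 du (in2 du M) y + in2 dv (in2 dv M) y)
   + \<i> * of_int k * w2 y * (in2 du M y + \<i> * in2 dv M y))"
  by (auto simp: fun_eq_iff in2_def Delta_def w2_def)

lemma in1_Delta: "in1 (Delta k) M y = (- ((w1 y)^2)) * (LD e1 (LD e1 M) y + LD f1 (LD f1 M) y)
   + \<i> * of_int k * w1 y * (LD e1 M y + \<i> * LD f1 M y)"
  unfolding in1_Delta_aux in1_du in1_dv ..
lemma in2_Delta: "in2 (Delta k) M y = (- ((w2 y)^2)) * (LD e2 (LD e2 M) y + LD f2 (LD f2 M) y)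
   + \<i> * of_int k * w2 y * (LD e2 M y + \<i> * LD f2 M y)"
  unfolding in2_Delta_aux in2_du in2_dv ..

lemma in1_Rpow_Suc: "in1 (Rpow (Suc j) k) M = in1 (Rop (k + 2 * int j)) (in1 (Rpow j k) M)"
  by (auto simp: fun_eq_iff in1_def)
lemma in2_Rpow_Suc: "in2 (Rpow (Suc j) k) M = in2 (Rop (k + 2 * int j)) (in2 (Rpow j k) M)"
  by (auto simp: fun_eq_iff in2_def)

definition GR :: "complex \<times> complex \<Rightarrow> complex \<times> complex \<Rightarrow> (complex \<times> complex \<Rightarrow> complex) \<Rightarrow> int
   \<Rightarrow> (complex \<times> complex \<Rightarrow> complex) \<Rightarrow> complex \<times> complex \<Rightarrow> complex" where
  "GR e f w m M y = 2 * \<i> * ((LD e M y - \<i> * LD f M y) / 2) + of_int m / w y * M y"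

fun GRp :: "complex \<times> complex \<Rightarrow> complex \<times> complex \<Rightarrow> (complex \<times> complex \<Rightarrow> complex) \<Rightarrow> nat \<Rightarrow> int
   \<Rightarrow> (complex \<times> complex \<Rightarrow> complex) \<Rightarrow> complex \<times> complex \<Rightarrow> complex" where
  "GRp e f w 0 k M = M"
| "GRp e f w (Suc j) k M = GR e f w (k + 2 * int j) (GRp e f w j k M)"

lemma in1_Rpow: "in1 (Rpow j k) M = GRp e1 f1 w1 j k M"
proof (induction j)
  case 0 then show ?case by (auto simp: fun_eq_iff in1_def)
next
  case (Suc j)
  show ?case unfolding in1_Rpow_Suc GRp.simps Suc[symmetric]
    by (auto simp: fun_eq_iff GR_def in1_Rop)
qed
lemma in2_Rpow: "in2 (Rpow j k) M = GRp e2 f2 w2 j k M"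
proof (induction j)
  case 0 then show ?case by (auto simp: fun_eq_iff in2_def)
next
  case (Suc j)
  show ?case unfolding in2_Rpow_Suc GRp.simps Suc[symmetric]
    by (auto simp: fun_eq_iff GR_def in2_Rop)
qed



definition cR :: "nat \<Rightarrow> int \<Rightarrow> nat \<Rightarrow> complex" where
  "cR j k r = of_nat (j choose r) * pochhammer (of_int k + of_nat r) (j - r) * (2*\<i>)^r"

lemma cR_out: "j < r \<Longrightarrow> cR j k r = 0" by (simp add: cR_def)

lemma nat_binom_id: "q < j \<Longrightarrow> Suc q * (j choose Suc q) = (j - q) * (j choose q)"
  using times_binomial_minus1_eq[of "Suc q" j] binomial_absorb_comp[of j q] by simp

lemma CI:
  assumes r: "r \<le> Suc j"
  shows "cR j k r * (of_int k + of_nat j + of_nat r) + (if r = 0 then 0 else 2*\<i> * cR j k (r - 1)) = cR (Suc j) k r"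
proof (cases r)
  case 0 then show ?thesis by (simp add: cR_def pochhammer_Suc)
next
  case (Suc q)
  show ?thesis
  proof (cases "q = j")
    case True
    then show ?thesis using Suc by (simp add: cR_def)
  next
    case False
    then have qj: "q < j" using r Suc by simp
    then obtain m where j: "j = Suc (q + m)" by (metis add_Suc_right less_iff_Suc_add)
    define P where "P = pochhammer (of_int k + of_nat q + 1 :: complex) m"
    define C1 where "C1 = (j choose Suc q)"
    define C0 where "C0 = (j choose q)"
    have h1: "cR j k (Suc q) = of_nat C1 * P * (2*\<i>)^Suc q"
      unfolding cR_def P_def C1_def using j by (simp add: add_ac)
    have h2: "cR j k q = of_nat C0 * ((of_int k + of_nat q) * P) * (2*\<i>)^q"
    proof -
      have "j - q = Suc m" using j by simp
      then show ?thesis unfolding cR_def P_def C0_def by (simp add: pochhammer_rec add_ac)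
    qed
    have h3: "cR (Suc j) k (Suc q) = (of_nat C0 + of_nat C1) * (P * (of_int k + of_nat j)) * (2*\<i>)^Suc q"
    proof -
      have "Suc j - Suc q = Suc m" using j by simp
      moreover have "(of_nat (Suc j choose Suc q) :: complex) = of_nat C0 + of_nat C1"
        unfolding C0_def C1_def by simp
      ultimately show ?thesis unfolding cR_def P_def using j by (simp add: pochhammer_Suc add_ac)
    qed
    have hn: "of_nat (Suc q) * of_nat C1 = (of_nat (Suc m) :: complex) * of_nat C0"
    proof -
      have "Suc q * C1 = Suc m * C0" unfolding C0_def C1_def using nat_binom_id[OF qj] j by simp
      then show ?thesis by (metis of_nat_mult)
    qed
    have hj: "(of_nat j :: complex) = of_nat q + of_nat m + 1" using j by simp
    have "cR j k r * (of_int k + of_nat j + of_nat r) + (if r = 0 then 0 else 2*\<i> * cR j k (r - 1))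
        = cR (Suc j) k (Suc q) + P * (2*\<i>)^Suc q * (of_nat (Suc q) * of_nat C1 - of_nat (Suc m) * of_nat C0)"
      unfolding Suc diff_Suc_1 h1 h2 h3 by (simp add: hj algebra_simps)
    also have "\<dots> = cR (Suc j) k r" using hn Suc by simp
    finally show ?thesis .
  qed
qed

lemma core:
  fixes a b :: complex
  assumes "s \<le> j"
  shows "((a + of_nat j - 1) gchoose s) * ((b + of_nat j - 1) gchoose (j - s)) * pochhammer a (j - s)
       = ((a + of_nat j - 1) gchoose j) * of_nat (j choose s) * pochhammer (b + of_nat s) (j - s)"
proof -
  obtain n where j: "j = s + n" using assms le_Suc_ex by blast
  have 1: "(a + of_nat j - 1) gchoose s = pochhammer (a + of_nat n) s / fact s"
    unfolding gbinomial_pochhammer' j by (simp add: algebra_simps)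
  have 2: "(b + of_nat j - 1) gchoose (j - s) = pochhammer (b + of_nat s) n / fact n"
    unfolding gbinomial_pochhammer' j by (simp add: algebra_simps)
  have 3: "(a + of_nat j - 1) gchoose j = pochhammer a n * pochhammer (a + of_nat n) s / fact j"
    unfolding gbinomial_pochhammer' j by (simp add: algebra_simps pochhammer_product' add.commute)
  have 4: "(of_nat (j choose s) :: complex) = fact j / (fact s * fact n)"
    using binomial_fact[OF assms] j by simp
  show ?thesis unfolding 1 2 3 4 using j by (simp add: field_simps)
qed

lemma Rstep:
  fixes X :: "nat \<Rightarrow> complex" and v :: complex
  shows "(\<Sum>r=0..j. cR j k r * (2*\<i> * ((\<i>/2) * of_nat (j-r) * v^Suc (j-r) * X r + v^(j-r) * X (Suc r))))
       + of_int (k + 2 * int j) * v * (\<Sum>r=0..j. cR j k r * (v^(j-r) * X r))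
       = (\<Sum>r=0..Suc j. cR (Suc j) k r * (v^(Suc j - r) * X r))"
proof -
  define A where "A r = cR j k r * (of_int k + of_nat j + of_nat r) * (v^(Suc j - r) * X r)" for r
  define B where "B r = (if r = 0 then 0 else 2*\<i> * cR j k (r - 1) * (v^(Suc j - r) * X r))" for r
  have S1: "(\<Sum>r=0..j. cR j k r * (2*\<i> * ((\<i>/2) * of_nat (j-r) * v^Suc (j-r) * X r + v^(j-r) * X (Suc r))))
      + of_int (k + 2 * int j) * v * (\<Sum>r=0..j. cR j k r * (v^(j-r) * X r))
      = (\<Sum>r=0..j. A r) + (\<Sum>r=0..j. B (Suc r))"
  proof -
    have "(\<Sum>r=0..j. cR j k r * (2*\<i> * ((\<i>/2) * of_nat (j-r) * v^Suc (j-r) * X r + v^(j-r) * X (Suc r))))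
      + of_int (k + 2 * int j) * v * (\<Sum>r=0..j. cR j k r * (v^(j-r) * X r))
      = (\<Sum>r=0..j. cR j k r * (2*\<i> * ((\<i>/2) * of_nat (j-r) * v^Suc (j-r) * X r + v^(j-r) * X (Suc r)))
          + of_int (k + 2 * int j) * v * (cR j k r * (v^(j-r) * X r)))"
      by (simp add: sum.distrib sum_distrib_left)
    also have "\<dots> = (\<Sum>r=0..j. A r + B (Suc r))"
    proof (rule sum.cong[OF refl])
      fix r assume "r \<in> {0..j}"
      then have rj: "r \<le> j" by simp
      have p: "v^Suc (j-r) = v^(Suc j - r)" using rj by (simp add: Suc_diff_le)
      have q: "(of_nat (j - r) :: complex) = of_nat j - of_nat r" using rj by (simp add: of_nat_diff)
      have "cR j k r * (2*\<i> * ((\<i>/2) * of_nat (j-r) * v^Suc (j-r) * X r + v^(j-r) * X (Suc r)))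
          + of_int (k + 2 * int j) * v * (cR j k r * (v^(j-r) * X r))
          = cR j k r * (of_int (k + 2 * int j) - of_nat (j - r)) * (v^Suc (j-r) * X r)
            + 2*\<i> * cR j k r * (v^(j-r) * X (Suc r))"
        by (simp add: algebra_simps)
      also have "\<dots> = A r + B (Suc r)"
        unfolding A_def B_def p q by (simp add: algebra_simps)
      finally show "cR j k r * (2*\<i> * ((\<i>/2) * of_nat (j-r) * v^Suc (j-r) * X r + v^(j-r) * X (Suc r)))
          + of_int (k + 2 * int j) * v * (cR j k r * (v^(j-r) * X r)) = A r + B (Suc r)" .
    qed
    also have "\<dots> = (\<Sum>r=0..j. A r) + (\<Sum>r=0..j. B (Suc r))" by (simp add: sum.distrib)
    finally show ?thesis .
  qed
  have S2: "(\<Sum>r=0..j. A r) = (\<Sum>r=0..Suc j. A r)"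
    unfolding sum.atLeast0_atMost_Suc using cR_out[of j "Suc j" k] by (simp add: A_def)
  have S3: "(\<Sum>r=0..j. B (Suc r)) = (\<Sum>r=0..Suc j. B r)"
    unfolding sum.atLeast0_atMost_Suc_shift[of B j] by (simp add: B_def)
  have S4: "(\<Sum>r=0..Suc j. A r) + (\<Sum>r=0..Suc j. B r) = (\<Sum>r=0..Suc j. cR (Suc j) k r * (v^(Suc j - r) * X r))"
  proof -
    have "(\<Sum>r=0..Suc j. A r) + (\<Sum>r=0..Suc j. B r) = (\<Sum>r=0..Suc j. A r + B r)" by (simp add: sum.distrib)
    also have "\<dots> = (\<Sum>r=0..Suc j. cR (Suc j) k r * (v^(Suc j - r) * X r))"
    proof (rule sum.cong[OF refl])
      fix r assume "r \<in> {0..Suc j}"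
      then have r: "r \<le> Suc j" by simp
      have "A r + B r = (cR j k r * (of_int k + of_nat j + of_nat r) + (if r = 0 then 0 else 2*\<i> * cR j k (r - 1))) * (v^(Suc j - r) * X r)"
        by (cases "r = 0") (simp_all add: A_def B_def algebra_simps)
      then show "A r + B r = cR (Suc j) k r * (v^(Suc j - r) * X r)" using CI[OF r, of k] by simp
    qed
    finally show ?thesis .
  qed
  show ?thesis unfolding S1 S2 S3 by (rule S4)
qed



type_synonym cc = "complex \<times> complex"

definition wgood :: "cc \<Rightarrow> cc \<Rightarrow> cc \<Rightarrow> cc \<Rightarrow> (cc \<Rightarrow> complex) \<Rightarrow> bool" where
  "wgood e f e' f' w \<longleftrightarrow> (\<forall>y\<in>UU. w differentiable at y \<and> w y \<noteq> 0 \<and> Dd e w y = 0 \<and> Dd f w y = 1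
      \<and> Dd e' w y = 0 \<and> Dd f' w y = 0)"

lemma wgood1: "wgood e1 f1 e2 f2 w1" by (simp add: wgood_def w1_diff w1_nz Dd_w1)
lemma wgood2: "wgood e2 f2 e1 f1 w2" by (simp add: wgood_def w2_diff w2_nz Dd_w2)

lemma wgoodD:
  assumes "wgood e f e' f' w" "y \<in> UU"
  shows "w differentiable at y" "w y \<noteq> 0" "LC \<alpha> \<beta> e f w y = \<beta>" "LC \<alpha> \<beta> e' f' w y = 0"
  using assms by (auto simp: wgood_def LC_def)

lemma sm_diff: "smooth_on UU F \<Longrightarrow> y \<in> UU \<Longrightarrow> F differentiable at y"
  using smooth_diff[OF open_UU] by blast

lemma M1:
  assumes wg: "wgood e f e' f' w" and h: "smooth_on UU h"
    and D: "\<And>y. y \<in> UU \<Longrightarrow> Pd e f (Qd e f h) y = (\<i> * of_int k / 2) * inverse (w y) * Qd e f h y"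
  shows "y \<in> UU \<Longrightarrow> Qd e f ((Pd e f ^^ m) h) y
            = ((\<i>/2)^m * pochhammer (of_int k) m) * (inverse (w y)^m * Qd e f h y)"
proof (induction m arbitrary: y)
  case 0 then show ?case by simp
next
  case (Suc m)
  define C where "C = (\<i>/2)^m * pochhammer (of_int k :: complex) m"
  have sm: "smooth_on UU ((Pd e f ^^ m) h)" by (rule LC_pow_smooth[OF open_UU h])
  note wd = wgoodD[OF wg Suc.prems]
  have dQ: "Qd e f h differentiable at y" using sm_diff[OF LC_smooth[OF open_UU h] Suc.prems] .
  have "Qd e f ((Pd e f ^^ Suc m) h) y = Pd e f (Qd e f ((Pd e f ^^ m) h)) y"
    using LC_comm[OF open_UU sm Suc.prems] by simp
  also have "\<dots> = Pd e f (\<lambda>z. C * (inverse (w z)^m * Qd e f h z)) y"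
    by (rule LC_local[OF open_UU Suc.prems]) (simp add: Suc.IH C_def)
  also have "\<dots> = C * Pd e f (\<lambda>z. inverse (w z)^m * Qd e f h z) y"
    by (rule LC_cmult) (intro differentiable_mult diff_inv_pow wd(1,2) dQ)
  also have "\<dots> = C * (Pd e f (\<lambda>z. inverse (w z)^m) y * Qd e f h y + inverse (w y)^m * Pd e f (Qd e f h) y)"
    using LC_mult[OF diff_inv_pow[OF wd(1,2)] dQ] by simp
  also have "\<dots> = C * ((- of_nat m * inverse (w y)^Suc m * (-\<i>/2)) * Qd e f h y
                 + inverse (w y)^m * ((\<i> * of_int k / 2) * inverse (w y) * Qd e f h y))"
    using LC_inv_pow[OF wd(1,2)] wd(3) D[OF Suc.prems] by simp
  also have "\<dots> = ((\<i>/2)^Suc m * pochhammer (of_int k) (Suc m)) * (inverse (w y)^Suc m * Qd e f h y)"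
    unfolding C_def by (simp add: pochhammer_Suc algebra_simps)
  finally show ?case .
qed

lemma M2:
  assumes wg: "wgood e f e' f' w" and h: "smooth_on UU h"
    and D: "\<And>y. y \<in> UU \<Longrightarrow> Pd e f (Qd e f h) y = (\<i> * of_int k / 2) * inverse (w y) * Qd e f h y"
    and y: "y \<in> UU"
  shows "Pd e f (Qd e f (LC \<alpha> \<beta> e' f' h)) y = (\<i> * of_int k / 2) * inverse (w y) * Qd e f (LC \<alpha> \<beta> e' f' h) y"
proof -
  define c where "c = \<i> * of_int k / (2::complex)"
  have smQ: "smooth_on UU (Qd e f h)" by (rule LC_smooth[OF open_UU h])
  note wd = wgoodD[OF wg y]
  have dQ: "Qd e f h differentiable at y" using sm_diff[OF smQ y] .
  have com: "\<And>z. z \<in> UU \<Longrightarrow> Qd e f (LC \<alpha> \<beta> e' f' h) z = LC \<alpha> \<beta> e' f' (Qd e f h) z"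
    using LC_comm[OF open_UU h] by blast
  have "Pd e f (Qd e f (LC \<alpha> \<beta> e' f' h)) y = Pd e f (LC \<alpha> \<beta> e' f' (Qd e f h)) y"
    by (rule LC_local[OF open_UU y]) (rule com)
  also have "\<dots> = LC \<alpha> \<beta> e' f' (Pd e f (Qd e f h)) y"
    using LC_comm[OF open_UU smQ y] by simp
  also have "\<dots> = LC \<alpha> \<beta> e' f' (\<lambda>z. c * (inverse (w z) ^ 1 * Qd e f h z)) y"
    by (rule LC_local[OF open_UU y]) (simp add: D c_def)
  also have "\<dots> = c * (LC \<alpha> \<beta> e' f' (\<lambda>z. inverse (w z) ^ 1) y * Qd e f h y + inverse (w y) ^ 1 * LC \<alpha> \<beta> e' f' (Qd e f h) y)"
    using LC_cmult[OF differentiable_mult[OF diff_inv_pow[OF wd(1,2), where m=1] dQ]] LC_mult[OF diff_inv_pow[OF wd(1,2), where m=1] dQ]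
    by simp
  also have "\<dots> = c * inverse (w y) * LC \<alpha> \<beta> e' f' (Qd e f h) y"
    using LC_inv_pow[OF wd(1,2), of \<alpha> \<beta> e' f' 1] wd(4) by simp
  also have "\<dots> = c * inverse (w y) * Qd e f (LC \<alpha> \<beta> e' f' h) y" using com[OF y] by simp
  finally show ?thesis unfolding c_def .
qed

lemma M2_pow:
  assumes wg: "wgood e f e' f' w" and h: "smooth_on UU h"
    and D: "\<And>y. y \<in> UU \<Longrightarrow> Pd e f (Qd e f h) y = (\<i> * of_int k / 2) * inverse (w y) * Qd e f h y"
  shows "y \<in> UU \<Longrightarrow> Pd e f (Qd e f ((LC \<alpha> \<beta> e' f' ^^ s) h)) y
     = (\<i> * of_int k / 2) * inverse (w y) * Qd e f ((LC \<alpha> \<beta> e' f' ^^ s) h) y"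
proof (induction s arbitrary: y)
  case 0 then show ?case using D by simp
next
  case (Suc s)
  show ?case using M2[OF wg LC_pow_smooth[OF open_UU h] Suc.IH Suc.prems] by simp
qed

lemma M3:
  assumes wg: "wgood e f e' f' w" and F: "smooth_on UU F"
  shows "y \<in> UU \<Longrightarrow> (LC \<alpha> \<beta> e' f' ^^ s) (\<lambda>z. c * (inverse (w z)^n * F z)) y
      = c * (inverse (w y)^n * (LC \<alpha> \<beta> e' f' ^^ s) F y)"
proof (induction s arbitrary: y)
  case 0 then show ?case by simp
next
  case (Suc s)
  note wd = wgoodD[OF wg Suc.prems]
  have dF: "(LC \<alpha> \<beta> e' f' ^^ s) F differentiable at y"
    using sm_diff[OF LC_pow_smooth[OF open_UU F] Suc.prems] .
  have "(LC \<alpha> \<beta> e' f' ^^ Suc s) (\<lambda>z. c * (inverse (w z)^n * F z)) y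
      = LC \<alpha> \<beta> e' f' (\<lambda>z. c * (inverse (w z)^n * (LC \<alpha> \<beta> e' f' ^^ s) F z)) y"
    by simp (rule LC_local[OF open_UU Suc.prems], rule Suc.IH)
  also have "\<dots> = c * (LC \<alpha> \<beta> e' f' (\<lambda>z. inverse (w z)^n) y * (LC \<alpha> \<beta> e' f' ^^ s) F y
        + inverse (w y)^n * LC \<alpha> \<beta> e' f' ((LC \<alpha> \<beta> e' f' ^^ s) F) y)"
    using LC_cmult[OF differentiable_mult[OF diff_inv_pow[OF wd(1,2)] dF]] LC_mult[OF diff_inv_pow[OF wd(1,2)] dF]
    by simp
  also have "\<dots> = c * (inverse (w y)^n * (LC \<alpha> \<beta> e' f' ^^ Suc s) F y)"
    using LC_inv_pow[OF wd(1,2), of \<alpha> \<beta> e' f' n] wd(4) by simp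
  finally show ?case .
qed

lemma Dconv:
  assumes wg: "wgood e f e' f' w" and g: "smooth_on UU g"
    and Del: "\<And>y. y \<in> UU \<Longrightarrow> (- ((w y)^2)) * (LD e (LD e g) y + LD f (LD f g) y)
                   + \<i> * of_int k * w y * (LD e g y + \<i> * LD f g y) = 0"
    and y: "y \<in> UU"
  shows "Pd e f (Qd e f g) y = (\<i> * of_int k / 2) * inverse (w y) * Qd e f g y"
proof -
  note wd = wgoodD[OF wg y]
  have dg: "\<And>z. z \<in> UU \<Longrightarrow> g differentiable at z" using sm_diff[OF g] by blast
  have dDg: "\<And>a z. z \<in> UU \<Longrightarrow> Dd a g differentiable at z" using smooth_diff_Dd[OF open_UU g] by blast
  have L1: "\<And>a z. z \<in> UU \<Longrightarrow> LD a g z = Dd a g z" using LD_Dd[OF open_UU _ _ dg] by blast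
  have L2: "\<And>a. LD a (LD a g) y = Dd a (Dd a g) y"
    using LD_Dd[OF open_UU y _ dDg[OF y]] L1 by blast
  have cl: "Dd e (Dd f g) y = Dd f (Dd e g) y" using clairaut[OF open_UU y dg dDg[OF y] dDg[OF y]] by simp
  have Q1: "Dd e (Qd e f g) y = (1/2) * Dd e (Dd e g) y + (\<i>/2) * Dd e (Dd f g) y"
    unfolding LC_def by (rule Dd_lin[OF dDg[OF y] dDg[OF y]])
  have Q2: "Dd f (Qd e f g) y = (1/2) * Dd f (Dd e g) y + (\<i>/2) * Dd f (Dd f g) y"
    unfolding LC_def by (rule Dd_lin[OF dDg[OF y] dDg[OF y]])
  have lhs: "Pd e f (Qd e f g) y = (Dd e (Dd e g) y + Dd f (Dd f g) y) / 4"
    unfolding LC_def[of "1/2" "-(\<i>/2)"] using Q1 Q2 cl by (simp add: algebra_simps)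
  define A where "A = Dd e (Dd e g) y + Dd f (Dd f g) y"
  define B where "B = Dd e g y + \<i> * Dd f g y"
  have "(- ((w y)^2)) * A + \<i> * of_int k * w y * B = 0"
    using Del[OF y] L1[OF y] L2 unfolding A_def B_def by simp
  moreover have "w y * (w y * A - \<i> * of_int k * B) = - ((- ((w y)^2)) * A + \<i> * of_int k * w y * B)"
    by (simp add: algebra_simps power2_eq_square)
  ultimately have "w y * (w y * A - \<i> * of_int k * B) = 0" by simp
  then have "w y * A = \<i> * of_int k * B" using wd(2) by simp
  then have "A = \<i> * of_int k * B / w y" using wd(2) by (simp add: field_simps)
  then have "Dd e (Dd e g) y + Dd f (Dd f g) y = \<i> * of_int k * (Dd e g y + \<i> * Dd f g y) / w y"
    unfolding A_def B_def .
  then show ?thesis unfolding lhs by (simp add: LC_def field_simps)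
qed



lemma M5:
  assumes wg: "wgood e f e' f' w" and F: "smooth_on UU F"
    and bd: "\<And>y. y \<in> UU \<Longrightarrow> \<beta> differentiable at y" and b0: "\<And>y. y \<in> UU \<Longrightarrow> Pd e f \<beta> y = 0"
    and M: "\<And>y. y \<in> UU \<Longrightarrow> M y = \<beta> y * F y"
  shows "y \<in> UU \<Longrightarrow> GRp e f w j k M y
     = \<beta> y * (\<Sum>r=0..j. cR j k r * (inverse (w y)^(j-r) * (Pd e f ^^ r) F y))"
proof (induction j arbitrary: y)
  case 0 then show ?case using M by (simp add: cR_def)
next
  case (Suc j)
  define T where "T = (\<lambda>r z. inverse (w z)^(j-r) * (Pd e f ^^ r) F z)"
  define S where "S = (\<lambda>z. \<Sum>r=0..j. cR j k r * T r z)"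
  define E where "E = (\<lambda>z. \<beta> z * S z)"
  define v where "v = inverse (w y)"
  define X where "X = (\<lambda>r. (Pd e f ^^ r) F y)"
  note wd = wgoodD[OF wg Suc.prems]
  have dP: "(Pd e f ^^ r) F differentiable at y" for r
    using sm_diff[OF LC_pow_smooth[OF open_UU F] Suc.prems] .
  have dT: "T r differentiable at y" for r
    unfolding T_def by (intro differentiable_mult diff_inv_pow wd(1,2) dP)
  have dcT: "(\<lambda>z. cR j k r * T r z) differentiable at y" for r
    by (intro differentiable_mult differentiable_const dT)
  have dS: "S differentiable at y"
    unfolding S_def by (intro differentiable_sum) (use dcT in auto)
  have dE: "E differentiable at y"
    unfolding E_def by (intro differentiable_mult bd Suc.prems dS)
  have EU: "\<And>z. z \<in> UU \<Longrightarrow> GRp e f w j k M z = E z" using Suc.IH by (simp add: E_def S_def T_def)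
  have LDe: "LD e (GRp e f w j k M) y = Dd e E y" by (rule LD_Dd[OF open_UU Suc.prems EU dE])
  have LDf: "LD f (GRp e f w j k M) y = Dd f E y" by (rule LD_Dd[OF open_UU Suc.prems EU dE])
  have PT: "Pd e f (T r) y = (\<i>/2) * of_nat (j-r) * v^Suc (j-r) * X r + v^(j-r) * X (Suc r)" for r
  proof -
    have "Pd e f (T r) y = Pd e f (\<lambda>z. inverse (w z)^(j-r)) y * X r + v^(j-r) * Pd e f ((Pd e f ^^ r) F) y"
      unfolding T_def X_def v_def by (rule LC_mult[OF diff_inv_pow[OF wd(1,2)] dP])
    then show ?thesis using LC_inv_pow[OF wd(1,2), of "1/2" "-(\<i>/2)" e f "j-r"] wd(3)
      by (simp add: X_def v_def)
  qed
  have PS: "Pd e f S y = (\<Sum>r=0..j. cR j k r * Pd e f (T r) y)"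
  proof -
    have "Pd e f S y = (\<Sum>r=0..j. Pd e f (\<lambda>z. cR j k r * T r z) y)"
      unfolding S_def by (rule LC_sum) (use dcT in auto)
    also have "\<dots> = (\<Sum>r=0..j. cR j k r * Pd e f (T r) y)"
      by (rule sum.cong[OF refl]) (rule LC_cmult[OF dT])
    finally show ?thesis .
  qed
  have PE: "Pd e f E y = \<beta> y * Pd e f S y"
    unfolding E_def using LC_mult[OF bd[OF Suc.prems] dS] b0[OF Suc.prems] by simp
  have ST: "S y = (\<Sum>r=0..j. cR j k r * (v^(j-r) * X r))" by (simp add: S_def T_def v_def X_def)
  have "GRp e f w (Suc j) k M y = 2 * \<i> * Pd e f E y + of_int (k + 2 * int j) * v * E y"
  proof -
    have "GRp e f w (Suc j) k M y = 2 * \<i> * ((Dd e E y - \<i> * Dd f E y) / 2) + of_int (k + 2 * int j) / w y * E y"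
      by (simp only: GRp.simps GR_def LDe LDf EU[OF Suc.prems])
    also have "(Dd e E y - \<i> * Dd f E y) / 2 = Pd e f E y" by (simp add: LC_def field_simps)
    also have "of_int (k + 2 * int j) / w y = of_int (k + 2 * int j) * v" by (simp add: v_def divide_inverse)
    finally show ?thesis .
  qed
  also have "\<dots> = \<beta> y * ((\<Sum>r=0..j. cR j k r * (2*\<i> * ((\<i>/2) * of_nat (j-r) * v^Suc (j-r) * X r + v^(j-r) * X (Suc r))))
       + of_int (k + 2 * int j) * v * (\<Sum>r=0..j. cR j k r * (v^(j-r) * X r)))"
  proof -
    define Z where "Z = (\<lambda>r. (\<i>/2) * of_nat (j-r) * v^Suc (j-r) * X r + v^(j-r) * X (Suc r))"
    define S1 where "S1 = (\<Sum>r=0..j. cR j k r * Z r)"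
    define S2 where "S2 = (\<Sum>r=0..j. cR j k r * (v^(j-r) * X r))"
    have a: "(\<Sum>r=0..j. cR j k r * (2*\<i> * Z r)) = 2*\<i> * S1"
      unfolding S1_def by (simp add: sum_distrib_left mult.left_commute)
    have b: "Pd e f E y = \<beta> y * S1" unfolding PE PS S1_def Z_def PT ..
    have c: "E y = \<beta> y * S2" unfolding E_def ST S2_def ..
    have "2 * \<i> * Pd e f E y + of_int (k + 2 * int j) * v * E y = \<beta> y * (2*\<i> * S1 + of_int (k + 2 * int j) * v * S2)"
      unfolding b c by (simp add: algebra_simps)
    then show ?thesis unfolding a[symmetric] Z_def S2_def .
  qed
  also have "\<dots> = \<beta> y * (\<Sum>r=0..Suc j. cR (Suc j) k r * (v^(Suc j - r) * X r))"
    by (simp only: Rstep)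
  finally show ?case by (simp add: v_def X_def)
qed



lemma open_uhp: "open uhp" unfolding uhp_def by (rule open_halfspace_Im_gt)

lemma in1_dtau_pow:
  assumes E: "smooth_on UU E" and ME: "\<And>y. y \<in> UU \<Longrightarrow> M y = E y"
  shows "y \<in> UU \<Longrightarrow> (in1 dtau ^^ n) M y = (Pd e1 f1 ^^ n) E y"
proof (induction n arbitrary: y)
  case 0 then show ?case using ME by simp
next
  case (Suc n)
  have d: "(Pd e1 f1 ^^ n) E differentiable at y" using sm_diff[OF LC_pow_smooth[OF open_UU E] Suc.prems] .
  have "(in1 dtau ^^ Suc n) M y = (LD e1 ((in1 dtau ^^ n) M) y - \<i> * LD f1 ((in1 dtau ^^ n) M) y) / 2"
    by (simp add: in1_dtau)
  also have "\<dots> = (Dd e1 ((Pd e1 f1 ^^ n) E) y - \<i> * Dd f1 ((Pd e1 f1 ^^ n) E) y) / 2"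
    using LD_Dd[OF open_UU Suc.prems Suc.IH d] by simp
  also have "\<dots> = (Pd e1 f1 ^^ Suc n) E y" by (simp add: LC_def field_simps)
  finally show ?case .
qed

lemma in2_dtau_pow:
  assumes E: "smooth_on UU E" and ME: "\<And>y. y \<in> UU \<Longrightarrow> M y = E y"
  shows "y \<in> UU \<Longrightarrow> (in2 dtau ^^ n) M y = (Pd e2 f2 ^^ n) E y"
proof (induction n arbitrary: y)
  case 0 then show ?case using ME by simp
next
  case (Suc n)
  have d: "(Pd e2 f2 ^^ n) E differentiable at y" using sm_diff[OF LC_pow_smooth[OF open_UU E] Suc.prems] .
  have "(in2 dtau ^^ Suc n) M y = (LD e2 ((in2 dtau ^^ n) M) y - \<i> * LD f2 ((in2 dtau ^^ n) M) y) / 2"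
    by (simp add: in2_dtau)
  also have "\<dots> = (Dd e2 ((Pd e2 f2 ^^ n) E) y - \<i> * Dd f2 ((Pd e2 f2 ^^ n) E) y) / 2"
    using LD_Dd[OF open_UU Suc.prems Suc.IH d] by simp
  also have "\<dots> = (Pd e2 f2 ^^ Suc n) E y" by (simp add: LC_def field_simps)
  finally show ?case .
qed

lemma Dd_diag:
  fixes \<Phi> :: "complex \<times> complex \<Rightarrow> complex" and z :: complex
  assumes "\<Phi> differentiable at (z, z)"
  shows "Dd a (\<lambda>z. \<Phi> (z, z)) z = Dd (a, a) \<Phi> (z, z)"
proof -
  obtain P where P: "(\<Phi> has_derivative P) (at (z, z))" using assms unfolding differentiable_def by blast
  have dg: "((\<lambda>z::complex. (z, z)) has_derivative (\<lambda>h. (h, h))) (at z)"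
    by (intro derivative_eq_intros) auto
  have "((\<lambda>z. \<Phi> (z, z)) has_derivative (\<lambda>h. P (h, h))) (at z)"
    using has_derivative_compose[OF dg, of \<Phi> P] P by simp
  note H = this
  show ?thesis using Dd_has[OF P, of "(a,a)"] Dd_has[OF H, of a] by simp
qed

lemma diag_diff:
  fixes \<Phi> :: "complex \<times> complex \<Rightarrow> complex" and z :: complex
  assumes "\<Phi> differentiable at (z, z)"
  shows "(\<lambda>z. \<Phi> (z, z)) differentiable at z"
proof -
  obtain P where P: "(\<Phi> has_derivative P) (at (z, z))" using assms unfolding differentiable_def by blast
  have dg: "((\<lambda>z::complex. (z, z)) has_derivative (\<lambda>h. (h, h))) (at z)"
    by (intro derivative_eq_intros) auto
  have "((\<lambda>z. \<Phi> (z, z)) has_derivative (\<lambda>h. P (h, h))) (at z)"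
    using has_derivative_compose[OF dg, of \<Phi> P] P by simp
  then show ?thesis unfolding differentiable_def by blast
qed

lemma Lop_diag:
  fixes \<Phi> :: "complex \<times> complex \<Rightarrow> complex"
  assumes d: "\<Phi> differentiable at (z, z)" and z: "z \<in> uhp"
    and eq: "\<And>z'. z' \<in> uhp \<Longrightarrow> \<phi> z' = \<Phi> (z', z')"
  shows "Lop \<phi> z = - 2 * \<i> * of_real ((Im z)^2) * (Qd e1 f1 \<Phi> (z, z) + Qd e2 f2 \<Phi> (z, z))"
proof -
  have dd: "(\<lambda>z. \<Phi> (z, z)) differentiable at z" by (rule diag_diff[OF d])
  have "du \<phi> z = vector_derivative (\<lambda>t::real. \<phi> (z + t *\<^sub>R 1)) (at 0)"
    by (simp add: du_def scaleR_conv_of_real)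
  also have "\<dots> = Dd 1 (\<lambda>z. \<Phi> (z, z)) z" by (rule vd_line[OF open_uhp z eq dd])
  also have "\<dots> = Dd ((1,0) + (0,1)) \<Phi> (z, z)" unfolding Dd_diag[OF d] by simp
  also have "\<dots> = Dd e1 \<Phi> (z, z) + Dd e2 \<Phi> (z, z)" by (rule Dd_add_dir[OF d])
  finally have du: "du \<phi> z = Dd e1 \<Phi> (z, z) + Dd e2 \<Phi> (z, z)" .
  have "dv \<phi> z = vector_derivative (\<lambda>t::real. \<phi> (z + t *\<^sub>R \<i>)) (at 0)"
    by (simp add: dv_def scaleR_conv_of_real mult.commute)
  also have "\<dots> = Dd \<i> (\<lambda>z. \<Phi> (z, z)) z" by (rule vd_line[OF open_uhp z eq dd])
  also have "\<dots> = Dd ((\<i>,0) + (0,\<i>)) \<Phi> (z, z)" unfolding Dd_diag[OF d] by simp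
  also have "\<dots> = Dd f1 \<Phi> (z, z) + Dd f2 \<Phi> (z, z)" by (rule Dd_add_dir[OF d])
  finally have dv: "dv \<phi> z = Dd f1 \<Phi> (z, z) + Dd f2 \<Phi> (z, z)" .
  show ?thesis unfolding Lop_def dtaubar_def du dv by (simp add: LC_def field_simps)
qed

lemma in1_Lop_on:
  assumes "\<And>z. z \<in> UU \<Longrightarrow> N z = E z" "E differentiable at y" "y \<in> UU"
  shows "in1 Lop N y = - 2 * \<i> * (w1 y)^2 * Qd e1 f1 E y"
  unfolding in1_Lop using LD_Dd[OF open_UU assms(3) assms(1) assms(2)] by (simp add: LC_def field_simps)

lemma in2_Lop_on:
  assumes "\<And>z. z \<in> UU \<Longrightarrow> N z = E z" "E differentiable at y" "y \<in> UU"
  shows "in2 Lop N y = - 2 * \<i> * (w2 y)^2 * Qd e2 f2 E y"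
  unfolding in2_Lop using LD_Dd[OF open_UU assms(3) assms(1) assms(2)] by (simp add: LC_def field_simps)

lemma LC_coef:
  assumes wg: "wgood e f e' f' w" and F: "F differentiable at y" and y: "y \<in> UU"
  shows "LC \<alpha> \<beta> e' f' (\<lambda>z. inverse (w z)^n * F z) y = inverse (w y)^n * LC \<alpha> \<beta> e' f' F y"
proof -
  note wd = wgoodD[OF wg y]
  show ?thesis using LC_mult[OF diff_inv_pow[OF wd(1,2)] F] LC_inv_pow[OF wd(1,2), of \<alpha> \<beta> e' f' n] wd(4)
    by simp
qed

lemma pow_id1:
  assumes "s \<le> j"
  shows "(2*\<i>)^j * (-1)^s * (\<i>/2)^(j-s) = (-1)^j * (2*\<i>::complex)^s"
proof -
  obtain n where j: "j = s + n" using assms le_Suc_ex by blast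
  have "(2*\<i>)^n * (\<i>/2)^n = ((2*\<i>) * (\<i>/2::complex))^n" by (simp only: power_mult_distrib)
  also have "(2*\<i>) * (\<i>/2::complex) = -1" by simp
  finally have h: "(2*\<i>)^n * (\<i>/2)^n = ((-1)^n :: complex)" .
  have "(2*\<i>)^j * (-1)^s * (\<i>/2)^(j-s) = (2*\<i>)^s * ((2*\<i>)^n * (\<i>/2)^n) * (-1::complex)^s"
    unfolding j by (simp only: power_add diff_add_inverse mult_ac)
  also have "\<dots> = (2*\<i>)^s * ((-1)^n * (-1::complex)^s)" unfolding h by (simp only: mult_ac)
  also have "\<dots> = (-1)^j * (2*\<i>::complex)^s" unfolding j by (simp only: power_add mult_ac)
  finally show ?thesis .
qed

lemma pow_id2:
  assumes "r \<le> j"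
  shows "(2*\<i>)^j * (-1)^(j-r) * (\<i>/2)^(j-r) = (2*\<i>::complex)^r"
proof -
  obtain n where j: "j = r + n" using assms le_Suc_ex by blast
  have "(2*\<i>)^n * (\<i>/2)^n = ((2*\<i>) * (\<i>/2::complex))^n" by (simp only: power_mult_distrib)
  also have "(2*\<i>) * (\<i>/2::complex) = -1" by simp
  finally have h: "(2*\<i>)^n * (\<i>/2)^n = ((-1)^n :: complex)" .
  have h2: "(-1)^n * (-1)^n = (1::complex)" by (simp flip: power_mult_distrib)
  have "(2*\<i>)^j * (-1)^(j-r) * (\<i>/2)^(j-r) = (2*\<i>)^r * ((2*\<i>)^n * (\<i>/2)^n) * (-1::complex)^n"
    unfolding j by (simp only: power_add diff_add_inverse mult_ac)
  also have "\<dots> = (2*\<i>)^r * ((-1)^n * (-1::complex)^n)" unfolding h by (simp only: mult_ac)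
  also have "\<dots> = (2*\<i>::complex)^r" unfolding h2 by simp
  finally show ?thesis .
qed

lemma I1:
  fixes k1 k2 :: int
  assumes "s \<le> j"
  shows "(2*\<i>)^j * (((-1)^s * ((of_int (k1 + int j - 1) :: complex) gchoose s) * ((of_int (k2 + int j - 1) :: complex) gchoose (j-s)))
            * (((\<i>/2)^(j-s) * pochhammer (of_int k1) (j-s)) * X))
       = (-1)^j * ((of_int (k1 + int j - 1) :: complex) gchoose j) * (cR j k2 s * X)"
proof -
  have a1: "(of_int (k1 + int j - 1) :: complex) = of_int k1 + of_nat j - 1" by simp
  have a2: "(of_int (k2 + int j - 1) :: complex) = of_int k2 + of_nat j - 1" by simp
  define gs where "gs = ((of_int k1 + of_nat j - 1 :: complex) gchoose s)"
  define gt where "gt = ((of_int k2 + of_nat j - 1 :: complex) gchoose (j - s))"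
  define gj where "gj = ((of_int k1 + of_nat j - 1 :: complex) gchoose j)"
  define p1 where "p1 = pochhammer (of_int k1 :: complex) (j - s)"
  define p2 where "p2 = pochhammer (of_int k2 + of_nat s :: complex) (j - s)"
  define bc where "bc = (of_nat (j choose s) :: complex)"
  have c: "gs * gt * p1 = gj * bc * p2"
    unfolding gs_def gt_def gj_def p1_def p2_def bc_def by (rule core[OF assms])
  have "(2*\<i>)^j * (((-1)^s * gs * gt) * (((\<i>/2)^(j-s) * p1) * X))
      = ((2*\<i>)^j * (-1)^s * (\<i>/2)^(j-s)) * ((gs * gt * p1) * X)"
    by (simp only: mult_ac)
  also have "\<dots> = ((-1)^j * (2*\<i>)^s) * ((gj * bc * p2) * X)"
    unfolding pow_id1[OF assms] c ..
  also have "\<dots> = (-1)^j * gj * (cR j k2 s * X)"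
    unfolding cR_def bc_def p2_def by (simp only: mult_ac)
  finally show ?thesis unfolding a1 a2 gs_def gt_def gj_def p1_def .
qed

lemma I2:
  fixes k1 k2 :: int
  assumes "r \<le> j"
  shows "(2*\<i>)^j * (((-1)^(j-r) * ((of_int (k1 + int j - 1) :: complex) gchoose (j-r)) * ((of_int (k2 + int j - 1) :: complex) gchoose (j-(j-r))))
            * (((\<i>/2)^(j-r) * pochhammer (of_int k2) (j-r)) * X))
       = ((of_int (k2 + int j - 1) :: complex) gchoose j) * (cR j k1 r * X)"
proof -
  have a1: "(of_int (k1 + int j - 1) :: complex) = of_int k1 + of_nat j - 1" by simp
  have a2: "(of_int (k2 + int j - 1) :: complex) = of_int k2 + of_nat j - 1" by simp
  have jj: "j - (j - r) = r" using assms by simp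
  define gs where "gs = ((of_int k2 + of_nat j - 1 :: complex) gchoose r)"
  define gt where "gt = ((of_int k1 + of_nat j - 1 :: complex) gchoose (j - r))"
  define gj where "gj = ((of_int k2 + of_nat j - 1 :: complex) gchoose j)"
  define p1 where "p1 = pochhammer (of_int k2 :: complex) (j - r)"
  define p2 where "p2 = pochhammer (of_int k1 + of_nat r :: complex) (j - r)"
  define bc where "bc = (of_nat (j choose r) :: complex)"
  have c: "gs * gt * p1 = gj * bc * p2"
    unfolding gs_def gt_def gj_def p1_def p2_def bc_def by (rule core[OF assms])
  have "(2*\<i>)^j * (((-1)^(j-r) * gt * gs) * (((\<i>/2)^(j-r) * p1) * X))
      = ((2*\<i>)^j * (-1)^(j-r) * (\<i>/2)^(j-r)) * ((gs * gt * p1) * X)"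
    by (simp only: mult_ac)
  also have "\<dots> = (2*\<i>)^r * ((gj * bc * p2) * X)"
    unfolding pow_id2[OF assms] c ..
  also have "\<dots> = gj * (cR j k1 r * X)"
    unfolding cR_def bc_def p2_def by (simp only: mult_ac)
  finally show ?thesis unfolding a1 a2 jj gs_def gt_def gj_def p1_def .
qed

lemma NK: "(- 4 * of_real pi) ^ j * (2 * of_real pi * \<i>) powi (- int j) = (2*\<i>::complex)^j"
proof -
  define X where "X = (2 * of_real pi * \<i> :: complex)"
  have 1: "X powi (- int j) = inverse (X^j)" by (simp only: power_int_minus power_int_of_nat)
  have 2: "(- 4 * of_real pi :: complex) = (2*\<i>) * X" unfolding X_def by (simp add: algebra_simps)
  have X0: "X^j \<noteq> 0" unfolding X_def by simp
  have "(- 4 * of_real pi) ^ j * X powi (- int j) = (2*\<i>)^j * (X^j * inverse (X^j))"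
    unfolding 1 2 power_mult_distrib by (simp only: mult.assoc)
  also have "\<dots> = (2*\<i>)^j" using X0 by simp
  finally show ?thesis unfolding X_def .
qed



theorem proposition5p8:
  fixes d :: nat and k1 k2 :: int and G :: "mat2 set"
    and g :: "complex \<times> complex \<Rightarrow> complex"
  assumes "real_quadratic_param d"
    and "congruence_subgroup d G"
    and "smooth_HMF d k1 k2 G g"
    and "\<forall>z1\<in>uhp. \<forall>z2\<in>uhp. in1 (Delta k1) g (z1, z2) = 0"
    and "\<forall>z1\<in>uhp. \<forall>z2\<in>uhp. in2 (Delta k2) g (z1, z2) = 0"
  shows "\<forall>j::nat. \<forall>z\<in>uhp.
    (- 4 * of_real pi) ^ j * Lop (cohen k1 k2 j g) z
      = ((of_int (k2 + int j - 1) :: complex) gchoose j)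
          * in1 (Rpow j k1) (in2 Lop g) (z, z)
        + (-1) ^ j * ((of_int (k1 + int j - 1) :: complex) gchoose j)
          * in1 Lop (in2 (Rpow j k2) g) (z, z)"
proof (intro allI ballI)
  fix j :: nat and z assume z: "z \<in> uhp"
  have g: "smooth_on UU g" using assms(3) unfolding smooth_HMF_def UU_def by blast
  have y0: "(z, z) \<in> UU" using z by (simp add: UU_def)
  have Del1: "(- ((w1 y)^2)) * (LD e1 (LD e1 g) y + LD f1 (LD f1 g) y)
      + \<i> * of_int k1 * w1 y * (LD e1 g y + \<i> * LD f1 g y) = 0" if yU: "y \<in> UU" for y
  proof -
    obtain a b where y: "y = (a, b)" "a \<in> uhp" "b \<in> uhp" using yU unfolding UU_def by (cases y) auto
    then have "in1 (Delta k1) g y = 0" using assms(4) by simp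
    then show ?thesis unfolding in1_Delta .
  qed
  have Del2: "(- ((w2 y)^2)) * (LD e2 (LD e2 g) y + LD f2 (LD f2 g) y)
      + \<i> * of_int k2 * w2 y * (LD e2 g y + \<i> * LD f2 g y) = 0" if yU: "y \<in> UU" for y
  proof -
    obtain a b where y: "y = (a, b)" "a \<in> uhp" "b \<in> uhp" using yU unfolding UU_def by (cases y) auto
    then have "in2 (Delta k2) g y = 0" using assms(5) by simp
    then show ?thesis unfolding in2_Delta .
  qed
  have D1: "Pd e1 f1 (Qd e1 f1 g) y = (\<i> * of_int k1 / 2) * inverse (w1 y) * Qd e1 f1 g y" if "y \<in> UU" for y
    by (rule Dconv[OF wgood1 g Del1 that])
  have D2: "Pd e2 f2 (Qd e2 f2 g) y = (\<i> * of_int k2 / 2) * inverse (w2 y) * Qd e2 f2 g y" if "y \<in> UU" for y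
    by (rule Dconv[OF wgood2 g Del2 that])
  define v where "v = inverse (complex_of_real (Im z))"
  have w1z: "w1 (z, z) = complex_of_real (Im z)" by (simp add: w1_def)
  have w2z: "w2 (z, z) = complex_of_real (Im z)" by (simp add: w2_def)
  define A where "A = (\<lambda>r. (Pd e1 f1 ^^ r) (Qd e2 f2 g) (z, z))"
  define B where "B = (\<lambda>r. (Pd e2 f2 ^^ r) (Qd e1 f1 g) (z, z))"
  define a1 where "a1 = (of_int (k1 + int j - 1) :: complex)"
  define a2 where "a2 = (of_int (k2 + int j - 1) :: complex)"
  define c where "c = (\<lambda>s. (-1)^s * (a1 gchoose s) * (a2 gchoose (j - s)))"
  define Gs where "Gs = (\<lambda>s. (Pd e1 f1 ^^ (j - s)) ((Pd e2 f2 ^^ s) g))"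
  define K where "K = (2 * of_real pi * \<i> :: complex) powi (- int j)"
  define \<Phi> where "\<Phi> = (\<lambda>y. K * (\<Sum>s=0..j. c s * Gs s y))"
  have smG: "smooth_on UU (Gs s)" for s unfolding Gs_def by (intro LC_pow_smooth open_UU g)
  have dG: "Gs s differentiable at (z, z)" for s using sm_diff[OF smG y0] .
  have dcG: "(\<lambda>y. c s * Gs s y) differentiable at (z, z)" for s
    by (intro differentiable_mult differentiable_const dG)
  have dSum: "(\<lambda>y. \<Sum>s=0..j. c s * Gs s y) differentiable at (z, z)"
    by (intro differentiable_sum) (use dcG in auto)
  have dPhi: "\<Phi> differentiable at (z, z)" unfolding \<Phi>_def
    by (intro differentiable_mult differentiable_const dSum)
  have coh: "cohen k1 k2 j g z' = \<Phi> (z', z')" if z': "z' \<in> uhp" for z'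
  proof -
    have y': "(z', z') \<in> UU" using z' by (simp add: UU_def)
    have i2: "(in2 dtau ^^ s) g y = (Pd e2 f2 ^^ s) g y" if "y \<in> UU" for s y
      by (rule in2_dtau_pow[OF g _ that]) simp
    have i1: "(in1 dtau ^^ (j - s)) ((in2 dtau ^^ s) g) (z', z') = Gs s (z', z')" for s
      unfolding Gs_def by (rule in1_dtau_pow[OF LC_pow_smooth[OF open_UU g] i2 y'])
    show ?thesis unfolding cohen_def \<Phi>_def K_def c_def a1_def a2_def i1 ..
  qed
  have L: "Lop (cohen k1 k2 j g) z = - 2 * \<i> * of_real ((Im z)^2) * (Qd e1 f1 \<Phi> (z, z) + Qd e2 f2 \<Phi> (z, z))"
    by (rule Lop_diag[OF dPhi z coh])
  have QPhi: "LC \<alpha> \<beta> e f \<Phi> (z, z) = K * (\<Sum>s=0..j. c s * LC \<alpha> \<beta> e f (Gs s) (z, z))" for \<alpha> \<beta> e f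
  proof -
    have "LC \<alpha> \<beta> e f \<Phi> (z, z) = K * LC \<alpha> \<beta> e f (\<lambda>y. \<Sum>s=0..j. c s * Gs s y) (z, z)"
      unfolding \<Phi>_def by (rule LC_cmult[OF dSum])
    also have "LC \<alpha> \<beta> e f (\<lambda>y. \<Sum>s=0..j. c s * Gs s y) (z, z) = (\<Sum>s=0..j. LC \<alpha> \<beta> e f (\<lambda>y. c s * Gs s y) (z, z))"
      by (rule LC_sum) (use dcG in auto)
    also have "\<dots> = (\<Sum>s=0..j. c s * LC \<alpha> \<beta> e f (Gs s) (z, z))"
      by (rule sum.cong[OF refl]) (rule LC_cmult[OF dG])
    finally show ?thesis .
  qed
  have QG1: "Qd e1 f1 (Gs s) (z, z) = ((\<i>/2)^(j-s) * pochhammer (of_int k1) (j-s)) * (v^(j-s) * B s)" for s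
  proof -
    have "Qd e1 f1 (Gs s) (z, z) = ((\<i>/2)^(j-s) * pochhammer (of_int k1) (j-s))
        * (inverse (w1 (z, z))^(j-s) * Qd e1 f1 ((Pd e2 f2 ^^ s) g) (z, z))"
      unfolding Gs_def by (rule M1[OF wgood1 LC_pow_smooth[OF open_UU g] M2_pow[OF wgood1 g D1] y0])
    also have "Qd e1 f1 ((Pd e2 f2 ^^ s) g) (z, z) = B s"
      unfolding B_def by (rule LC_iter_comm[OF open_UU g y0])
    finally show ?thesis by (simp add: w1z v_def)
  qed
  have QG2: "Qd e2 f2 (Gs s) (z, z) = ((\<i>/2)^s * pochhammer (of_int k2) s) * (v^s * A (j-s))" for s
  proof -
    define C where "C = (\<i>/2)^s * pochhammer (of_int k2 :: complex) s"
    have "Qd e2 f2 (Gs s) (z, z) = (Pd e1 f1 ^^ (j-s)) (Qd e2 f2 ((Pd e2 f2 ^^ s) g)) (z, z)"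
      unfolding Gs_def by (rule LC_iter_comm[OF open_UU LC_pow_smooth[OF open_UU g] y0])
    also have "\<dots> = (Pd e1 f1 ^^ (j-s)) (\<lambda>y. C * (inverse (w2 y)^s * Qd e2 f2 g y)) (z, z)"
      by (rule LC_pow_local[OF open_UU _ y0]) (simp add: C_def M1[OF wgood2 g D2])
    also have "\<dots> = C * (inverse (w2 (z, z))^s * (Pd e1 f1 ^^ (j-s)) (Qd e2 f2 g) (z, z))"
      by (rule M3[OF wgood2 LC_smooth[OF open_UU g] y0])
    finally show ?thesis by (simp add: C_def w2z v_def A_def)
  qed
  have R1: "in1 (Rpow j k1) (in2 Lop g) (z, z)
      = (- 2 * \<i> * (w2 (z, z) * w2 (z, z))) * (\<Sum>r=0..j. cR j k1 r * (v^(j-r) * A r))"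
  proof -
    define \<beta> where "\<beta> = (\<lambda>y. - 2 * \<i> * (w2 y * w2 y))"
    have bd: "\<beta> differentiable at y" if "y \<in> UU" for y
      unfolding \<beta>_def by (intro differentiable_mult differentiable_const w2_diff)
    have lw: "Pd e1 f1 w2 y = 0" for y by (simp add: LC_def Dd_w2)
    have b0: "Pd e1 f1 \<beta> y = 0" if "y \<in> UU" for y
    proof -
      have "Pd e1 f1 \<beta> y = (- 2 * \<i>) * Pd e1 f1 (\<lambda>z. w2 z * w2 z) y"
        unfolding \<beta>_def by (rule LC_cmult[OF differentiable_mult[OF w2_diff w2_diff]])
      also have "Pd e1 f1 (\<lambda>z. w2 z * w2 z) y = Pd e1 f1 w2 y * w2 y + w2 y * Pd e1 f1 w2 y"
        by (rule LC_mult[OF w2_diff w2_diff])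
      finally show ?thesis using lw by simp
    qed
    have Meq: "in2 Lop g y = \<beta> y * Qd e2 f2 g y" if "y \<in> UU" for y
      using in2_Lop_on[of g g y] sm_diff[OF g that] that by (simp add: \<beta>_def power2_eq_square)
    have "in1 (Rpow j k1) (in2 Lop g) (z, z) = GRp e1 f1 w1 j k1 (in2 Lop g) (z, z)" by (simp add: in1_Rpow)
    also have "\<dots> = \<beta> (z, z) * (\<Sum>r=0..j. cR j k1 r * (inverse (w1 (z, z))^(j-r) * (Pd e1 f1 ^^ r) (Qd e2 f2 g) (z, z)))"
      by (rule M5[OF wgood1 LC_smooth[OF open_UU g] bd b0 Meq y0])
    finally show ?thesis by (simp add: \<beta>_def w1z v_def A_def)
  qed
  have R2: "in1 Lop (in2 (Rpow j k2) g) (z, z)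
      = (- 2 * \<i> * (w1 (z, z))^2) * (\<Sum>r=0..j. cR j k2 r * (v^(j-r) * B r))"
  proof -
    define T where "T = (\<lambda>r y. cR j k2 r * (inverse (w2 y)^(j-r) * (Pd e2 f2 ^^ r) g y))"
    define E2 where "E2 = (\<lambda>y. (1::complex) * (\<Sum>r=0..j. T r y))"
    have dc: "Dd a (\<lambda>_. 1::complex) y = 0" for a y using Dd_has[OF has_derivative_const, of a 1 y] by simp
    have NE: "in2 (Rpow j k2) g y = E2 y" if "y \<in> UU" for y
      unfolding in2_Rpow E2_def T_def by (rule M5[OF wgood2 g _ _ _ that]) (auto simp: LC_def dc)
    have dPr: "(Pd e2 f2 ^^ r) g differentiable at (z, z)" for r using sm_diff[OF LC_pow_smooth[OF open_UU g] y0] .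
    have dI: "(\<lambda>y. inverse (w2 y)^(j-r) * (Pd e2 f2 ^^ r) g y) differentiable at (z, z)" for r
      by (intro differentiable_mult diff_inv_pow w2_diff w2_nz y0 dPr)
    have dT: "T r differentiable at (z, z)" for r unfolding T_def
      by (intro differentiable_mult differentiable_const dI)
    have dS: "(\<lambda>y. \<Sum>r=0..j. T r y) differentiable at (z, z)" by (intro differentiable_sum) (use dT in auto)
    have dE2: "E2 differentiable at (z, z)" unfolding E2_def by (intro differentiable_mult differentiable_const dS)
    have "in1 Lop (in2 (Rpow j k2) g) (z, z) = - 2 * \<i> * (w1 (z, z))^2 * Qd e1 f1 E2 (z, z)"
      by (rule in1_Lop_on[OF NE dE2 y0])
    also have "Qd e1 f1 E2 (z, z) = (\<Sum>r=0..j. cR j k2 r * (v^(j-r) * B r))"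
    proof -
      have "Qd e1 f1 E2 (z, z) = 1 * Qd e1 f1 (\<lambda>y. \<Sum>r=0..j. T r y) (z, z)"
        unfolding E2_def by (rule LC_cmult[OF dS])
      also have "Qd e1 f1 (\<lambda>y. \<Sum>r=0..j. T r y) (z, z) = (\<Sum>r=0..j. Qd e1 f1 (T r) (z, z))"
        by (rule LC_sum) (use dT in auto)
      also have "\<dots> = (\<Sum>r=0..j. cR j k2 r * (v^(j-r) * B r))"
      proof (rule sum.cong[OF refl])
        fix r
        have "Qd e1 f1 (T r) (z, z) = cR j k2 r * Qd e1 f1 (\<lambda>y. inverse (w2 y)^(j-r) * (Pd e2 f2 ^^ r) g y) (z, z)"
          unfolding T_def by (rule LC_cmult[OF dI])
        also have "Qd e1 f1 (\<lambda>y. inverse (w2 y)^(j-r) * (Pd e2 f2 ^^ r) g y) (z, z)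
            = inverse (w2 (z, z))^(j-r) * Qd e1 f1 ((Pd e2 f2 ^^ r) g) (z, z)"
          by (rule LC_coef[OF wgood2 dPr y0])
        also have "Qd e1 f1 ((Pd e2 f2 ^^ r) g) (z, z) = B r"
          unfolding B_def by (rule LC_iter_comm[OF open_UU g y0])
        finally show "Qd e1 f1 (T r) (z, z) = cR j k2 r * (v^(j-r) * B r)" by (simp add: w2z v_def)
      qed
      finally show ?thesis by simp
    qed
    finally show ?thesis .
  qed
  have SB: "(2*\<i>)^j * (\<Sum>s=0..j. c s * Qd e1 f1 (Gs s) (z, z))
      = (-1)^j * (a1 gchoose j) * (\<Sum>s=0..j. cR j k2 s * (v^(j-s) * B s))"
    unfolding sum_distrib_left
  proof (rule sum.cong[OF refl])
    fix s assume "s \<in> {0..j}"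
    then have s: "s \<le> j" by simp
    show "(2*\<i>)^j * (c s * Qd e1 f1 (Gs s) (z, z)) = (-1)^j * (a1 gchoose j) * (cR j k2 s * (v^(j-s) * B s))"
      unfolding QG1 c_def a1_def a2_def by (rule I1[OF s])
  qed
  have SA: "(2*\<i>)^j * (\<Sum>s=0..j. c s * Qd e2 f2 (Gs s) (z, z))
      = (a2 gchoose j) * (\<Sum>r=0..j. cR j k1 r * (v^(j-r) * A r))"
  proof -
    have "(\<Sum>s=0..j. c s * Qd e2 f2 (Gs s) (z, z)) = (\<Sum>r=0..j. c (j - r) * Qd e2 f2 (Gs (j - r)) (z, z))"
      using sum.atLeastAtMost_rev[of "\<lambda>s. c s * Qd e2 f2 (Gs s) (z, z)" 0 j] by simp
    then have "(2*\<i>)^j * (\<Sum>s=0..j. c s * Qd e2 f2 (Gs s) (z, z))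
        = (\<Sum>r=0..j. (2*\<i>)^j * (c (j - r) * Qd e2 f2 (Gs (j - r)) (z, z)))"
      by (simp add: sum_distrib_left)
    also have "\<dots> = (\<Sum>r=0..j. (a2 gchoose j) * (cR j k1 r * (v^(j-r) * A r)))"
    proof (rule sum.cong[OF refl])
      fix r assume "r \<in> {0..j}"
      then have r: "r \<le> j" by simp
      have Ar: "A (j - (j - r)) = A r" using r by simp
      show "(2*\<i>)^j * (c (j - r) * Qd e2 f2 (Gs (j - r)) (z, z)) = (a2 gchoose j) * (cR j k1 r * (v^(j-r) * A r))"
        unfolding QG2 c_def a1_def a2_def Ar[symmetric] by (rule I2[OF r])
    qed
    also have "\<dots> = (a2 gchoose j) * (\<Sum>r=0..j. cR j k1 r * (v^(j-r) * A r))"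
      by (simp add: sum_distrib_left)
    finally show ?thesis .
  qed
  define S1 where "S1 = (\<Sum>s=0..j. c s * Qd e1 f1 (Gs s) (z, z))"
  define S2 where "S2 = (\<Sum>s=0..j. c s * Qd e2 f2 (Gs s) (z, z))"
  define SAr where "SAr = (\<Sum>r=0..j. cR j k1 r * (v^(j-r) * A r))"
  define SBr where "SBr = (\<Sum>s=0..j. cR j k2 s * (v^(j-s) * B s))"
  define R where "R = - 2 * \<i> * (complex_of_real (Im z))^2"
  have NKj: "(- 4 * of_real pi) ^ j * K = (2*\<i>)^j" unfolding K_def by (rule NK)
  have "(- 4 * of_real pi) ^ j * Lop (cohen k1 k2 j g) z = R * (((- 4 * of_real pi) ^ j * K) * S1 + ((- 4 * of_real pi) ^ j * K) * S2)"
    unfolding L QPhi S1_def[symmetric] S2_def[symmetric] R_def by (simp add: algebra_simps)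
  also have "\<dots> = R * ((-1)^j * (a1 gchoose j) * SBr + (a2 gchoose j) * SAr)"
    unfolding NKj using SA SB unfolding S1_def[symmetric] S2_def[symmetric] SAr_def[symmetric] SBr_def[symmetric] by simp
  also have "\<dots> = (a2 gchoose j) * in1 (Rpow j k1) (in2 Lop g) (z, z) + (-1)^j * (a1 gchoose j) * in1 Lop (in2 (Rpow j k2) g) (z, z)"
    unfolding R1 R2 SAr_def[symmetric] SBr_def[symmetric] R_def w1z w2z by (simp add: algebra_simps power2_eq_square)
  finally show "(- 4 * of_real pi) ^ j * Lop (cohen k1 k2 j g) z
      = ((of_int (k2 + int j - 1) :: complex) gchoose j) * in1 (Rpow j k1) (in2 Lop g) (z, z)
        + (-1) ^ j * ((of_int (k1 + int j - 1) :: complex) gchoose j) * in1 Lop (in2 (Rpow j k2) g) (z, z)"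
    unfolding a1_def a2_def .
qed


end
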